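(* Let $M=\bigoplus_{\mathbf a\in\mathbb Z^d}M_{\mathbf a}$ be a $\mathbb Z^d$-graded left $D(R_A)$-module (i.e. $D(R_A)_{\mathbf b}M_{\mathbf a}\subseteq M_{\mathbf a+\mathbf b}$) which is simple as a graded module (it has no nonzero proper $\mathbb Z^d$-graded submodules). Then $M$ is isomorphic to $L(\boldsymbol\alpha)$ as a left $D(R_A)$-module for some $\boldsymbol\alpha\in\mathbb C^d$.
   Context: $A\subset\mathbb Z^d$ is a finite set generating the group $\mathbb Z^d$; $R_A=\mathbb C[\mathbb NA]\subseteq\mathbb C[t_1^{\pm1},\dots,t_d^{\pm1}]$; $D(R_A)=\{P\in\mathbb C[t^{\pm1}]\langle\partial_1,\dots,\partial_d\rangle: P(R_A)\subseteq R_A\}$; $s_j=t_j\partial_j$; $D(R_A)_{\mathbf a}=\{P\in D(R_A):[s_j,P]=a_jP\ \forall j\}$, giving $D(R_A)=\bigoplus_{\mathbf a\in\mathbb Z^d}D(R_A)_{\mathbf a}$. $M(\boldsymbol\alpha)=D(R_A)/\sum_iD(R_A)(s_i-\alpha_i)$; in the category $\mathcal O$ of left $D(R_A)$-modules that are direct sums of finite-dimensional weight spaces $M_{\boldsymbol\lambda}=\{x:f(s)x=f(\boldsymbol\lambda)x\ \forall f\in\mathbb C[s]\}$, $M(\boldsymbol\alpha)$ has a unique simple quotient, denoted $L(\boldsymbol\alpha)$. *)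

theory Defs
  imports Complex_Main "HOL-Algebra.Module" "HOL-Algebra.AbelCoset" "HOL-Algebra.FiniteProduct"
begin

text \<open>Lattice points of Z^d are functions 'n \<Rightarrow> int, with 'n a finite index type (d = CARD('n)).\<close>

definition vadd :: "('n \<Rightarrow> int) \<Rightarrow> ('n \<Rightarrow> int) \<Rightarrow> ('n \<Rightarrow> int)" where
  "vadd m b = (\<lambda>j. m j + b j)"

definition vsub :: "('n \<Rightarrow> int) \<Rightarrow> ('n \<Rightarrow> int) \<Rightarrow> ('n \<Rightarrow> int)" where
  "vsub m b = (\<lambda>j. m j - b j)"

definition generates_Zd :: "('n::finite \<Rightarrow> int) set \<Rightarrow> bool" where
  "generates_Zd A \<longleftrightarrow> finite A \<and>
     (\<forall>x. \<exists>z :: ('n \<Rightarrow> int) \<Rightarrow> int. \<forall>j. x j = (\<Sum>a\<in>A. z a * a j))"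

definition semigrp :: "('n \<Rightarrow> int) set \<Rightarrow> ('n \<Rightarrow> int) set" where
  "semigrp A = {m. \<exists>c :: ('n \<Rightarrow> int) \<Rightarrow> nat. \<forall>j. m j = (\<Sum>a\<in>A. int (c a) * a j)}"

definition polyfun :: "(('n::finite \<Rightarrow> int) \<Rightarrow> complex) \<Rightarrow> bool" where
  "polyfun f \<longleftrightarrow> (\<exists>(K :: ('n \<Rightarrow> nat) set) (c :: ('n \<Rightarrow> nat) \<Rightarrow> complex). finite K \<and>
      (\<forall>m. f m = (\<Sum>k\<in>K. c k * (\<Prod>j\<in>UNIV. of_int (m j) ^ k j))))"

text \<open>An operator P in the Laurent Weyl algebra C[t^{\<pm>1}]<\<partial>> is encoded by its kernel:
  P(t^m) = \<Sum>_b P b m * t^(m+b), i.e. P = \<Sum>_b t^b p_b(s) with p_b = P b polynomial.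
  This encoding is bijective (the algebra acts faithfully on C[t^{\<pm>1}]).\<close>
type_synonym 'n kern = "('n \<Rightarrow> int) \<Rightarrow> ('n \<Rightarrow> int) \<Rightarrow> complex"

definition ksupp :: "'n kern \<Rightarrow> ('n \<Rightarrow> int) set" where
  "ksupp P = {b. \<exists>m. P b m \<noteq> 0}"

definition weyl_op :: "('n::finite) kern \<Rightarrow> bool" where
  "weyl_op P \<longleftrightarrow> finite (ksupp P) \<and> (\<forall>b. polyfun (P b))"

text \<open>P(R_A) \<subseteq> R_A, where R_A is spanned by the monomials t^m, m \<in> NA.\<close>
definition preserves :: "('n \<Rightarrow> int) set \<Rightarrow> 'n kern \<Rightarrow> bool" where
  "preserves A P \<longleftrightarrow> (\<forall>m\<in>semigrp A. \<forall>b. P b m \<noteq> 0 \<longrightarrow> vadd m b \<in> semigrp A)"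

text \<open>Composition P \<circ> Q.\<close>
definition kmult :: "'n kern \<Rightarrow> 'n kern \<Rightarrow> 'n kern" where
  "kmult P Q = (\<lambda>e m. \<Sum>b\<in>ksupp Q. Q b m * P (vsub e b) (vadd m b))"

definition DR :: "('n::finite \<Rightarrow> int) set \<Rightarrow> 'n kern ring" where
  "DR A = \<lparr> carrier = {P. weyl_op P \<and> preserves A P},
            mult = kmult,
            one = (\<lambda>b m. if b = (\<lambda>_. 0) then 1 else 0),
            zero = (\<lambda>b m. 0),
            add = (\<lambda>P Q b m. P b m + Q b m) \<rparr>"

text \<open>Scalars and the Euler operators s_j = t_j \<partial>_j.\<close>
definition kscal :: "complex \<Rightarrow> 'n kern" where
  "kscal c = (\<lambda>b m. if b = (\<lambda>_. 0) then c else 0)"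

definition euler :: "'n \<Rightarrow> 'n kern" where
  "euler j = (\<lambda>b m. if b = (\<lambda>_. 0) then of_int (m j) else 0)"

definition Dgr :: "('n::finite \<Rightarrow> int) set \<Rightarrow> ('n \<Rightarrow> int) \<Rightarrow> 'n kern set" where
  "Dgr A a = {P \<in> carrier (DR A). \<forall>j.
      euler j \<otimes>\<^bsub>DR A\<^esub> P \<ominus>\<^bsub>DR A\<^esub> P \<otimes>\<^bsub>DR A\<^esub> euler j = kscal (of_int (a j)) \<otimes>\<^bsub>DR A\<^esub> P}"

text \<open>Left modules over a (not necessarily commutative) ring.\<close>
locale left_module = R?: ring R + M?: abelian_group M for R (structure) and M (structure) +
  assumes lsmult_closed:
      "\<lbrakk>a \<in> carrier R; x \<in> carrier M\<rbrakk> \<Longrightarrow> a \<odot>\<^bsub>M\<^esub> x \<in> carrier M"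
    and lsmult_l_distr:
      "\<lbrakk>a \<in> carrier R; b \<in> carrier R; x \<in> carrier M\<rbrakk> \<Longrightarrow>
      (a \<oplus> b) \<odot>\<^bsub>M\<^esub> x = a \<odot>\<^bsub>M\<^esub> x \<oplus>\<^bsub>M\<^esub> b \<odot>\<^bsub>M\<^esub> x"
    and lsmult_r_distr:
      "\<lbrakk>a \<in> carrier R; x \<in> carrier M; y \<in> carrier M\<rbrakk> \<Longrightarrow>
      a \<odot>\<^bsub>M\<^esub> (x \<oplus>\<^bsub>M\<^esub> y) = a \<odot>\<^bsub>M\<^esub> x \<oplus>\<^bsub>M\<^esub> a \<odot>\<^bsub>M\<^esub> y"
    and lsmult_assoc1:
      "\<lbrakk>a \<in> carrier R; b \<in> carrier R; x \<in> carrier M\<rbrakk> \<Longrightarrow>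
      (a \<otimes> b) \<odot>\<^bsub>M\<^esub> x = a \<odot>\<^bsub>M\<^esub> (b \<odot>\<^bsub>M\<^esub> x)"
    and lsmult_one:
      "x \<in> carrier M \<Longrightarrow> \<one> \<odot>\<^bsub>M\<^esub> x = x"

definition regmod :: "('a, 'b) ring_scheme \<Rightarrow> ('a, 'a) module" where
  "regmod R = \<lparr> carrier = carrier R, mult = mult R, one = one R, zero = zero R,
               add = add R, smult = mult R \<rparr>"

definition quot_module :: "('a, 'b) module \<Rightarrow> 'b set \<Rightarrow> ('a, 'b set) module" where
  "quot_module M N = \<lparr> carrier = a_rcosets\<^bsub>M\<^esub> N, mult = (\<lambda>_ _. undefined), one = undefined,
      zero = N, add = set_add M,
      smult = (\<lambda>r X. N +>\<^bsub>M\<^esub> (r \<odot>\<^bsub>M\<^esub> (SOME x. x \<in> X))) \<rparr>"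

definition verma_ideal :: "('n::finite \<Rightarrow> int) set \<Rightarrow> ('n \<Rightarrow> complex) \<Rightarrow> 'n kern set" where
  "verma_ideal A \<alpha> = {finsum (DR A) (\<lambda>i. P i \<otimes>\<^bsub>DR A\<^esub> (euler i \<ominus>\<^bsub>DR A\<^esub> kscal (\<alpha> i))) UNIV
                       | P. \<forall>i. P i \<in> carrier (DR A)}"

definition verma :: "('n::finite \<Rightarrow> int) set \<Rightarrow> ('n \<Rightarrow> complex) \<Rightarrow> ('n kern, 'n kern set) module" where
  "verma A \<alpha> = quot_module (regmod (DR A)) (verma_ideal A \<alpha>)"

definition maximal_submodule :: "('a, 'c) ring_scheme \<Rightarrow> ('a, 'b) module \<Rightarrow> 'b set \<Rightarrow> bool" where
  "maximal_submodule R M N \<longleftrightarrow> submodule N R M \<and> N \<noteq> carrier M \<and>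
     (\<forall>N'. submodule N' R M \<and> N \<subseteq> N' \<longrightarrow> N' = N \<or> N' = carrier M)"

text \<open>L(\<alpha>): the (unique) simple quotient M(\<alpha>)/N of M(\<alpha>), N the maximal submodule.\<close>

definition module_iso :: "('a, 'c) ring_scheme \<Rightarrow> ('a, 'b) module \<Rightarrow> ('a, 'd) module \<Rightarrow> ('b \<Rightarrow> 'd) \<Rightarrow> bool" where
  "module_iso R M M' f \<longleftrightarrow> bij_betw f (carrier M) (carrier M') \<and>
     (\<forall>x\<in>carrier M. \<forall>y\<in>carrier M. f (x \<oplus>\<^bsub>M\<^esub> y) = f x \<oplus>\<^bsub>M'\<^esub> f y) \<and>
     (\<forall>r\<in>carrier R. \<forall>x\<in>carrier M. f (r \<odot>\<^bsub>M\<^esub> x) = r \<odot>\<^bsub>M'\<^esub> f x)"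

definition graded_module :: "('n::finite \<Rightarrow> int) set \<Rightarrow> ('n kern, 'm) module \<Rightarrow> (('n \<Rightarrow> int) \<Rightarrow> 'm set) \<Rightarrow> bool" where
  "graded_module A M gr \<longleftrightarrow> left_module (DR A) M \<and>
     (\<forall>a. subgroup (gr a) (add_monoid M)) \<and>
     (\<forall>x\<in>carrier M. \<exists>!c. (\<forall>a. c a \<in> gr a) \<and> finite {a. c a \<noteq> \<zero>\<^bsub>M\<^esub>} \<and>
                          x = finsum M c {a. c a \<noteq> \<zero>\<^bsub>M\<^esub>}) \<and>
     (\<forall>a b. \<forall>P\<in>Dgr A b. \<forall>x\<in>gr a. P \<odot>\<^bsub>M\<^esub> x \<in> gr (vadd a b))"

definition graded_submodule :: "('n::finite \<Rightarrow> int) set \<Rightarrow> ('n kern, 'm) module \<Rightarrow> (('n \<Rightarrow> int) \<Rightarrow> 'm set) \<Rightarrow> 'm set \<Rightarrow> bool" where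
  "graded_submodule A M gr N \<longleftrightarrow> submodule N (DR A) M \<and>
     (\<forall>x\<in>N. \<exists>c. (\<forall>a. c a \<in> gr a \<inter> N) \<and> finite {a. c a \<noteq> \<zero>\<^bsub>M\<^esub>} \<and>
                 x = finsum M c {a. c a \<noteq> \<zero>\<^bsub>M\<^esub>})"

definition graded_simple :: "('n::finite \<Rightarrow> int) set \<Rightarrow> ('n kern, 'm) module \<Rightarrow> (('n \<Rightarrow> int) \<Rightarrow> 'm set) \<Rightarrow> bool" where
  "graded_simple A M gr \<longleftrightarrow> graded_module A M gr \<and> carrier M \<noteq> {\<zero>\<^bsub>M\<^esub>} \<and>
     (\<forall>N. graded_submodule A M gr N \<longrightarrow> N = {\<zero>\<^bsub>M\<^esub>} \<or> N = carrier M)"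

end

theory Submission
  imports Defs "HOL-Library.Function_Algebras" "HOL-Analysis.Continuum_Not_Denumerable"
    "HOL-Computational_Algebra.Fundamental_Theorem_Algebra" "HOL-Library.Countable_Set"
begin

context left_module
begin

lemma lsm_zero_r: assumes "a \<in> carrier R" shows "a \<odot>\<^bsub>M\<^esub> \<zero>\<^bsub>M\<^esub> = \<zero>\<^bsub>M\<^esub>"
proof -
  have c: "a \<odot>\<^bsub>M\<^esub> \<zero>\<^bsub>M\<^esub> \<in> carrier M" using assms lsmult_closed by simp
  have "a \<odot>\<^bsub>M\<^esub> \<zero>\<^bsub>M\<^esub> \<oplus>\<^bsub>M\<^esub> a \<odot>\<^bsub>M\<^esub> \<zero>\<^bsub>M\<^esub> = a \<odot>\<^bsub>M\<^esub> \<zero>\<^bsub>M\<^esub> \<oplus>\<^bsub>M\<^esub> \<zero>\<^bsub>M\<^esub>"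
    using lsmult_r_distr[OF assms, of "\<zero>\<^bsub>M\<^esub>" "\<zero>\<^bsub>M\<^esub>"] c by simp
  thus ?thesis using c by (metis M.add.Units_l_cancel M.add.Units_eq M.zero_closed)
qed

lemma lsm_zero_l: assumes "x \<in> carrier M" shows "\<zero> \<odot>\<^bsub>M\<^esub> x = \<zero>\<^bsub>M\<^esub>"
proof -
  have c: "\<zero> \<odot>\<^bsub>M\<^esub> x \<in> carrier M" using assms lsmult_closed by simp
  have "\<zero> \<odot>\<^bsub>M\<^esub> x \<oplus>\<^bsub>M\<^esub> \<zero> \<odot>\<^bsub>M\<^esub> x = \<zero> \<odot>\<^bsub>M\<^esub> x \<oplus>\<^bsub>M\<^esub> \<zero>\<^bsub>M\<^esub>"
    using lsmult_l_distr[of "\<zero>" "\<zero>" x] assms c by simp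
  thus ?thesis using c by (metis M.add.Units_l_cancel M.add.Units_eq M.zero_closed)
qed

lemma lsm_minus_l: assumes "a \<in> carrier R" "x \<in> carrier M"
  shows "(\<ominus> a) \<odot>\<^bsub>M\<^esub> x = \<ominus>\<^bsub>M\<^esub> (a \<odot>\<^bsub>M\<^esub> x)"
proof -
  have "a \<odot>\<^bsub>M\<^esub> x \<oplus>\<^bsub>M\<^esub> (\<ominus> a) \<odot>\<^bsub>M\<^esub> x = \<zero>\<^bsub>M\<^esub>"
    using lsmult_l_distr[of a "\<ominus> a" x] assms lsm_zero_l by (simp add: R.r_neg)
  thus ?thesis using assms lsmult_closed
    by (metis M.add.inv_closed M.add.inv_equality M.add.m_comm M.r_neg R.add.inv_closed)
qed

lemma lsm_minus_r: assumes "a \<in> carrier R" "x \<in> carrier M"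
  shows "a \<odot>\<^bsub>M\<^esub> (\<ominus>\<^bsub>M\<^esub> x) = \<ominus>\<^bsub>M\<^esub> (a \<odot>\<^bsub>M\<^esub> x)"
proof -
  have "a \<odot>\<^bsub>M\<^esub> x \<oplus>\<^bsub>M\<^esub> a \<odot>\<^bsub>M\<^esub> (\<ominus>\<^bsub>M\<^esub> x) = \<zero>\<^bsub>M\<^esub>"
    using lsmult_r_distr[of a x "\<ominus>\<^bsub>M\<^esub> x"] assms lsm_zero_r by (simp add: M.r_neg)
  thus ?thesis using assms lsmult_closed
    by (metis M.add.inv_closed M.add.inv_equality M.add.m_comm M.r_neg)
qed

lemma lsm_diff_l: assumes "a \<in> carrier R" "b \<in> carrier R" "x \<in> carrier M"
  shows "(a \<ominus> b) \<odot>\<^bsub>M\<^esub> x = a \<odot>\<^bsub>M\<^esub> x \<ominus>\<^bsub>M\<^esub> b \<odot>\<^bsub>M\<^esub> x"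
  using assms by (simp add: a_minus_def lsmult_l_distr lsm_minus_l)

lemma lsm_finsum_r: assumes "finite S" "a \<in> carrier R" "f \<in> S \<rightarrow> carrier M"
  shows "a \<odot>\<^bsub>M\<^esub> finsum M f S = finsum M (\<lambda>i. a \<odot>\<^bsub>M\<^esub> f i) S"
  using assms
proof (induct S rule: finite_induct)
  case empty then show ?case by (simp add: lsm_zero_r)
next
  case (insert x F) then show ?case
    by (simp add: Pi_def lsmult_r_distr lsmult_closed M.finsum_closed)
qed

lemma lsm_finsum_l: assumes "finite S" "x \<in> carrier M" "f \<in> S \<rightarrow> carrier R"
  shows "finsum R f S \<odot>\<^bsub>M\<^esub> x = finsum M (\<lambda>i. f i \<odot>\<^bsub>M\<^esub> x) S"
  using assms
proof (induct S rule: finite_induct)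
  case empty then show ?case by (simp add: lsm_zero_l)
next
  case (insert y F) then show ?case
    by (simp add: Pi_def lsmult_l_distr lsmult_closed R.finsum_closed)
qed

end

definition mono :: "('n::finite \<Rightarrow> nat) \<Rightarrow> ('n \<Rightarrow> int) \<Rightarrow> complex" where
  "mono k m = (\<Prod>j\<in>UNIV. of_int (m j) ^ k j)"

lemma polyfun_alt: "polyfun f \<longleftrightarrow> (\<exists>K c. finite K \<and> (\<forall>k. k \<notin> K \<longrightarrow> c k = 0) \<and>
      (\<forall>m. f m = (\<Sum>k\<in>K. c k * mono k m)))"
proof
  assume "polyfun f"
  then obtain K c where K: "finite K" "\<forall>m. f m = (\<Sum>k\<in>K. c k * mono k m)"
    unfolding polyfun_def mono_def by blast
  let ?c = "\<lambda>k. if k \<in> K then c k else 0"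
  have "\<forall>m. f m = (\<Sum>k\<in>K. ?c k * mono k m)" using K by simp
  with K show "\<exists>K c. finite K \<and> (\<forall>k. k \<notin> K \<longrightarrow> c k = 0) \<and> (\<forall>m. f m = (\<Sum>k\<in>K. c k * mono k m))"
    by (intro exI[of _ K] exI[of _ ?c]) auto
next
  assume "\<exists>K c. finite K \<and> (\<forall>k. k \<notin> K \<longrightarrow> c k = 0) \<and> (\<forall>m. f m = (\<Sum>k\<in>K. c k * mono k m))"
  then show "polyfun f" unfolding polyfun_def mono_def by blast
qed

lemma polyfun_ext: assumes "finite K" "\<forall>k. k \<notin> K \<longrightarrow> c k = 0" "K \<subseteq> K'" "finite K'"
  shows "(\<Sum>k\<in>K. c k * mono k m) = (\<Sum>k\<in>K'. c k * mono k m)"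
  using assms by (intro sum.mono_neutral_right[symmetric]) auto

lemma polyfun_zero: "polyfun (\<lambda>m. 0)"
  unfolding polyfun_def by (intro exI[of _ "{}"]) auto

lemma polyfun_const: "polyfun (\<lambda>m. c)"
  unfolding polyfun_def by (intro exI[of _ "{\<lambda>_. 0}"] exI[of _ "\<lambda>_. c"]) auto

lemma polyfun_add: assumes "polyfun f" "polyfun g" shows "polyfun (\<lambda>m. f m + g m)"
proof -
  obtain K1 c1 where 1: "finite K1" "\<forall>k. k \<notin> K1 \<longrightarrow> c1 k = 0" "\<forall>m. f m = (\<Sum>k\<in>K1. c1 k * mono k m)"
    using assms(1) unfolding polyfun_alt by blast
  obtain K2 c2 where 2: "finite K2" "\<forall>k. k \<notin> K2 \<longrightarrow> c2 k = 0" "\<forall>m. g m = (\<Sum>k\<in>K2. c2 k * mono k m)"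
    using assms(2) unfolding polyfun_alt by blast
  have "\<forall>m. f m + g m = (\<Sum>k\<in>K1 \<union> K2. (c1 k + c2 k) * mono k m)"
  proof
    fix m
    have "f m = (\<Sum>k\<in>K1 \<union> K2. c1 k * mono k m)" using 1 2 polyfun_ext[of K1 c1 "K1 \<union> K2"] by auto
    moreover have "g m = (\<Sum>k\<in>K1 \<union> K2. c2 k * mono k m)" using 1 2 polyfun_ext[of K2 c2 "K1 \<union> K2"] by auto
    ultimately show "f m + g m = (\<Sum>k\<in>K1 \<union> K2. (c1 k + c2 k) * mono k m)"
      by (simp add: sum.distrib distrib_right)
  qed
  with 1 2 show ?thesis unfolding polyfun_alt
    by (intro exI[of _ "K1 \<union> K2"] exI[of _ "\<lambda>k. c1 k + c2 k"]) auto
qed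

lemma polyfun_scale: assumes "polyfun f" shows "polyfun (\<lambda>m. a * f m)"
proof -
  obtain K1 c1 where 1: "finite K1" "\<forall>m. f m = (\<Sum>k\<in>K1. c1 k * mono k m)"
    using assms(1) unfolding polyfun_alt by blast
  have "\<forall>m. a * f m = (\<Sum>k\<in>K1. (a * c1 k) * mono k m)" using 1 by (simp add: sum_distrib_left mult.assoc)
  with 1 show ?thesis unfolding polyfun_alt[of "\<lambda>m. a * f m"]
    by (intro exI[of _ K1] exI[of _ "\<lambda>k. if k \<in> K1 then a * c1 k else 0"]) auto
qed

lemma polyfun_neg: assumes "polyfun f" shows "polyfun (\<lambda>m. - f m)"
  using polyfun_scale[OF assms, of "-1"] by simp

lemma mono_shift: "mono (k(j := k j + 1)) m = of_int (m j) * mono k m"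
proof -
  have "mono (k(j := k j + 1)) m = (\<Prod>i\<in>UNIV. of_int (m i) ^ k i * (if i = j then of_int (m i) else 1))"
    unfolding mono_def by (intro prod.cong) auto
  also have "\<dots> = mono k m * of_int (m j)"
    unfolding mono_def prod.distrib by (simp add: prod.delta)
  finally show ?thesis by simp
qed

lemma polyfun_mult_var: assumes "polyfun f" shows "polyfun (\<lambda>m. of_int (m j) * f m)"
proof -
  obtain K c where 1: "finite K" "\<forall>m. f m = (\<Sum>k\<in>K. c k * mono k m)"
    using assms(1) unfolding polyfun_alt by blast
  define sh where "sh = (\<lambda>k::'a \<Rightarrow> nat. k(j := k j + 1))"
  define c' where "c' = (\<lambda>k::'a \<Rightarrow> nat. c (k(j := k j - 1)))"
  have inj: "inj_on sh K"
  proof (rule inj_onI)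
    fix x y assume "sh x = sh y"
    then have "\<forall>i. (sh x) i = (sh y) i" by simp
    then have "\<forall>i. x i = y i" unfolding sh_def by (metis add_right_cancel fun_upd_apply)
    then show "x = y" by auto
  qed
  have c'sh: "c' (sh k) = c k" for k unfolding c'_def sh_def by simp
  have "\<forall>m. of_int (m j) * f m = (\<Sum>k\<in>sh ` K. c' k * mono k m)"
  proof
    fix m
    have "(\<Sum>k\<in>sh ` K. c' k * mono k m) = (\<Sum>k\<in>K. c' (sh k) * mono (sh k) m)"
      by (rule sum.reindex[OF inj, unfolded comp_def])
    also have "\<dots> = (\<Sum>k\<in>K. of_int (m j) * (c k * mono k m))"
    proof (intro sum.cong refl)
      fix k
      have e: "mono (sh k) m = of_int (m j) * mono k m" unfolding sh_def by (rule mono_shift)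
      show "c' (sh k) * mono (sh k) m = of_int (m j) * (c k * mono k m)"
        by (simp add: c'sh e)
    qed
    finally show "of_int (m j) * f m = (\<Sum>k\<in>sh ` K. c' k * mono k m)"
      using 1 by (simp add: sum_distrib_left)
  qed
  with 1 show ?thesis unfolding polyfun_alt[of "\<lambda>m. of_int (m j) * f m"]
    by (intro exI[of _ "sh ` K"] exI[of _ "\<lambda>k. if k \<in> sh ` K then c' k else 0"]) auto
qed

lemma polyfun_poly: "polyfun (\<lambda>m. poly p (of_int (m j)))"
proof (induct p)
  case 0 then show ?case by (simp add: polyfun_zero)
next
  case (pCons a p)
  then show ?case
    by (simp add: polyfun_add polyfun_const polyfun_mult_var)
qed

lemma polyfun_var: "polyfun (\<lambda>m. of_int (m j))"
  using polyfun_mult_var[OF polyfun_const[of 1]] by simp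

lemma vadd_zero[simp]: "vadd m (\<lambda>_. 0) = m" by (simp add: vadd_def)
lemma vsub_zero[simp]: "vsub e (\<lambda>_. 0) = e" by (simp add: vsub_def)
lemma vsub_eq_zero[simp]: "vsub e b = (\<lambda>_. 0) \<longleftrightarrow> e = b"
  by (auto simp: vsub_def fun_eq_iff)
lemma vadd_vsub[simp]: "vadd b (vsub a b) = a" by (simp add: vadd_def vsub_def)
lemma vsub_vadd[simp]: "vsub (vadd b a) b = a" by (simp add: vadd_def vsub_def)

lemma DR_mult: "monoid.mult (DR A) = kmult" by (simp add: DR_def)

lemma DR_simps[simp]:
  "carrier (DR A) = {P. weyl_op P \<and> preserves A P}"
  "monoid.one (DR A) = (\<lambda>b m. if b = (\<lambda>_. 0) then 1 else 0)"
  "ring.zero (DR A) = (\<lambda>b m. 0)"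
  "ring.add (DR A) = (\<lambda>P Q b m. P b m + Q b m)"
  by (simp_all add: DR_def)

lemma ksupp_iff: "b \<in> ksupp P \<longleftrightarrow> (\<exists>m. P b m \<noteq> 0)" by (simp add: ksupp_def)
lemma not_ksupp: "b \<notin> ksupp P \<Longrightarrow> P b m = 0" by (simp add: ksupp_def)

lemma sum_kern_apply: "(\<Sum>i\<in>S. (f i :: 'n kern)) b m = (\<Sum>i\<in>S. f i b m)"
  by (induct S rule: infinite_finite_induct) auto

lemma single_zero_off: "ksupp P \<subseteq> {b} \<Longrightarrow> e \<noteq> b \<Longrightarrow> P e m = 0"
  by (metis not_ksupp singletonD subsetD)

lemma kmult_single: assumes "ksupp Q \<subseteq> {b}"
  shows "kmult P Q e m = Q b m * P (vsub e b) (vadd m b)"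
proof (cases "b \<in> ksupp Q")
  case True
  then have "ksupp Q = {b}" using assms by auto
  then show ?thesis by (simp add: kmult_def)
next
  case False
  then have "ksupp Q = {}" using assms by auto
  then show ?thesis using False by (simp add: kmult_def not_ksupp)
qed

definition diag :: "'n kern \<Rightarrow> bool" where "diag P \<longleftrightarrow> ksupp P \<subseteq> {\<lambda>_. 0}"

lemma kmult_diag: "diag Q \<Longrightarrow> kmult P Q e m = Q (\<lambda>_. 0) m * P e m"
  unfolding diag_def by (simp add: kmult_single)

lemma mult_single: "ksupp Q \<subseteq> {b} \<Longrightarrow> (P \<otimes>\<^bsub>DR A\<^esub> Q) e m = Q b m * P (vsub e b) (vadd m b)"
  by (simp add: DR_mult kmult_single)

lemma mult_diag: "diag Q \<Longrightarrow> (P \<otimes>\<^bsub>DR A\<^esub> Q) e m = Q (\<lambda>_. 0) m * P e m"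
  by (simp add: DR_mult kmult_diag)

lemma diag_zero_off: "diag P \<Longrightarrow> e \<noteq> (\<lambda>_. 0) \<Longrightarrow> P e m = 0"
  unfolding diag_def by (metis not_ksupp singletonD subsetD)

lemma diagI: "(\<And>e m. e \<noteq> (\<lambda>_. 0) \<Longrightarrow> P e m = 0) \<Longrightarrow> diag P"
  unfolding diag_def ksupp_def by auto

lemma weyl_op_diagI: "diag P \<Longrightarrow> polyfun (P (\<lambda>_. 0)) \<Longrightarrow> weyl_op P"
proof -
  assume d: "diag P" and p: "polyfun (P (\<lambda>_. 0))"
  have "finite (ksupp P)" using d unfolding diag_def by (rule finite_subset) simp
  moreover have "polyfun (P b)" for b
  proof (cases "b = (\<lambda>_. 0)")
    case True then show ?thesis using p by simp
  next
    case False
    then have "P b = (\<lambda>m. 0)" using diag_zero_off[OF d] by auto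
    then show ?thesis by (simp add: polyfun_zero)
  qed
  ultimately show ?thesis unfolding weyl_op_def by blast
qed

lemma preserves_diagI: "diag P \<Longrightarrow> preserves A P"
  unfolding preserves_def
proof (intro ballI allI impI)
  fix m b assume d: "diag P" and m: "m \<in> semigrp A" and "P b m \<noteq> 0"
  then have "b = (\<lambda>_. 0)" using diag_zero_off[OF d] by blast
  then show "vadd m b \<in> semigrp A" using m by simp
qed

lemma diag_carrier: "diag P \<Longrightarrow> polyfun (P (\<lambda>_. 0)) \<Longrightarrow> P \<in> carrier (DR A)"
  by (simp add: weyl_op_diagI preserves_diagI)

lemma diag_kscal: "diag (kscal c)" by (rule diagI) (simp add: kscal_def)
lemma kscal_carrier[simp]: "kscal c \<in> carrier (DR A)"
  by (rule diag_carrier[OF diag_kscal]) (simp add: kscal_def polyfun_const)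

lemma diag_euler: "diag (euler j)" by (rule diagI) (simp add: euler_def)
lemma euler_carrier[simp]: "euler j \<in> carrier (DR A)"
  by (rule diag_carrier[OF diag_euler]) (simp add: euler_def polyfun_var)

definition hc :: "('n \<Rightarrow> int) \<Rightarrow> 'n kern \<Rightarrow> 'n kern" where
  "hc b P = (\<lambda>e m. if e = b then P e m else 0)"

lemma ksupp_hc: "ksupp (hc b P) \<subseteq> {b}" by (auto simp: ksupp_def hc_def)

lemma hc_carrier: assumes "P \<in> carrier (DR A)" shows "hc b P \<in> carrier (DR A)"
proof -
  have "ksupp (hc b P) \<subseteq> ksupp P" by (auto simp: ksupp_def hc_def)
  moreover have "polyfun (hc b P e)" for e
    using assms by (cases "e = b") (auto simp: hc_def weyl_op_def polyfun_zero)
  ultimately show ?thesis using assms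
    by (auto simp: weyl_op_def preserves_def hc_def intro: finite_subset)
qed

lemma neg_carrier: assumes "P \<in> carrier (DR A)" shows "(\<lambda>b m. - P b m) \<in> carrier (DR A)"
proof -
  have "ksupp (\<lambda>b m. - P b m) = ksupp P" by (auto simp: ksupp_def)
  then show ?thesis using assms by (auto simp: weyl_op_def preserves_def polyfun_neg)
qed

definition opj :: "'n \<Rightarrow> complex poly \<Rightarrow> 'n kern" where
  "opj j p = (\<lambda>b m. if b = (\<lambda>_. 0) then poly p (of_int (m j)) else 0)"

lemma diag_opj: "diag (opj j p)" by (rule diagI) (simp add: opj_def)
lemma opj_carrier[simp]: "opj j p \<in> carrier (DR A)"
  by (rule diag_carrier[OF diag_opj]) (simp add: opj_def polyfun_poly)

definition monoker :: "('n::finite \<Rightarrow> nat) \<Rightarrow> 'n kern" where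
  "monoker k = (\<lambda>b m. if b = (\<lambda>_. 0) then mono k m else 0)"

lemma diag_span: assumes "diag P" "P \<in> carrier (DR A)"
  shows "\<exists>K c. finite K \<and> P = (\<Sum>k\<in>K. (\<lambda>b m. c k * monoker k b m))"
proof -
  have "polyfun (P (\<lambda>_. 0))" using assms by (simp add: weyl_op_def)
  then obtain K c where K: "finite K" "\<forall>m. P (\<lambda>_. 0) m = (\<Sum>k\<in>K. c k * mono k m)"
    unfolding polyfun_alt by blast
  have "P = (\<Sum>k\<in>K. (\<lambda>b m. c k * monoker k b m))"
  proof (intro ext)
    fix b m
    show "P b m = (\<Sum>k\<in>K. (\<lambda>b m. c k * monoker k b m)) b m"
      using K diag_zero_off[OF assms(1)] by (cases "b = (\<lambda>_. 0)") (auto simp: sum_kern_apply monoker_def)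
  qed
  with K show ?thesis by blast
qed

locale drr =
  fixes A :: "('n::finite \<Rightarrow> int) set"
  assumes ringD: "ring (DR A)"
begin

sublocale D: ring "DR A" by (rule ringD)

lemma a_inv_DR: assumes "P \<in> carrier (DR A)" shows "\<ominus>\<^bsub>DR A\<^esub> P = (\<lambda>b m. - P b m)"
  using assms neg_carrier[OF assms] by (intro D.minus_equality) auto

lemma minus_DR: assumes "P \<in> carrier (DR A)" "Q \<in> carrier (DR A)"
  shows "P \<ominus>\<^bsub>DR A\<^esub> Q = (\<lambda>b m. P b m - Q b m)"
  using assms by (simp add: a_minus_def a_inv_DR)

lemma finsum_DR: assumes "finite S" "f \<in> S \<rightarrow> carrier (DR A)"
  shows "finsum (DR A) f S = (\<lambda>b m. \<Sum>i\<in>S. f i b m)"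
  using assms
proof (induct S rule: finite_induct)
  case empty then show ?case by simp
next
  case (insert x F)
  then have "finsum (DR A) f (insert x F) = f x \<oplus>\<^bsub>DR A\<^esub> finsum (DR A) f F"
    by (intro D.finsum_insert) auto
  with insert show ?case by simp
qed

lemma kscal_mult_l: assumes "P \<in> carrier (DR A)"
  shows "kscal c \<otimes>\<^bsub>DR A\<^esub> P = (\<lambda>b m. c * P b m)"
proof (intro ext)
  fix e m
  have "kmult (kscal c) P e m = (\<Sum>b\<in>ksupp P. if b = e then P b m * c else 0)"
    unfolding kmult_def kscal_def by (intro sum.cong) auto
  also have "\<dots> = c * P e m"
    using assms by (auto simp: weyl_op_def not_ksupp)
  finally show "(kscal c \<otimes>\<^bsub>DR A\<^esub> P) e m = c * P e m" by (simp add: DR_mult)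
qed

lemma kscal_mult_r: "P \<otimes>\<^bsub>DR A\<^esub> kscal c = (\<lambda>b m. c * P b m)"
proof (intro ext)
  fix e m
  have "(P \<otimes>\<^bsub>DR A\<^esub> kscal c) e m = kscal c (\<lambda>_. 0) m * P e m" by (rule mult_diag[OF diag_kscal])
  then show "(P \<otimes>\<^bsub>DR A\<^esub> kscal c) e m = c * P e m" by (simp add: kscal_def)
qed

lemma kscal_add: "kscal (c + d) = kscal c \<oplus>\<^bsub>DR A\<^esub> kscal d"
  by (auto simp: kscal_def intro!: ext)

lemma kscal_mult: "kscal (c * d) = kscal c \<otimes>\<^bsub>DR A\<^esub> kscal d"
  unfolding kscal_mult_r by (auto simp: kscal_def intro!: ext)

lemma kscal_one: "kscal 1 = \<one>\<^bsub>DR A\<^esub>"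
  by (auto simp: kscal_def intro!: ext)

lemma kscal_zero: "kscal 0 = \<zero>\<^bsub>DR A\<^esub>"
  by (auto simp: kscal_def intro!: ext)

lemma hc_sum: assumes "P \<in> carrier (DR A)"
  shows "P = finsum (DR A) (\<lambda>b. hc b P) (ksupp P)"
proof -
  have fin: "finite (ksupp P)" using assms by (simp add: weyl_op_def)
  have "finsum (DR A) (\<lambda>b. hc b P) (ksupp P) = (\<lambda>e m. \<Sum>b\<in>ksupp P. hc b P e m)"
    using fin hc_carrier[OF assms] by (intro finsum_DR) auto
  also have "\<dots> = P"
  proof (intro ext)
    fix e m
    show "(\<Sum>b\<in>ksupp P. hc b P e m) = P e m"
      using fin by (auto simp: hc_def not_ksupp)
  qed
  finally show ?thesis by simp
qed

lemma euler_comm: assumes "P \<in> carrier (DR A)" "ksupp P \<subseteq> {b}"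
  shows "euler j \<otimes>\<^bsub>DR A\<^esub> P = P \<otimes>\<^bsub>DR A\<^esub> (euler j \<oplus>\<^bsub>DR A\<^esub> kscal (of_int (b j)))"
proof (intro ext)
  fix e m
  have d: "diag (euler j \<oplus>\<^bsub>DR A\<^esub> kscal (of_int (b j)))"
    by (rule diagI) (simp add: euler_def kscal_def)
  have "(euler j \<otimes>\<^bsub>DR A\<^esub> P) e m = P b m * (if e = b then of_int (m j) + of_int (b j) else 0)"
    using assms(2) by (simp add: mult_single euler_def vadd_def)
  also have "\<dots> = (of_int (m j) + of_int (b j)) * P e m"
    using single_zero_off[OF assms(2)] by auto
  also have "\<dots> = (P \<otimes>\<^bsub>DR A\<^esub> (euler j \<oplus>\<^bsub>DR A\<^esub> kscal (of_int (b j)))) e m"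
    unfolding mult_diag[OF d] by (simp add: euler_def kscal_def)
  finally show "(euler j \<otimes>\<^bsub>DR A\<^esub> P) e m = (P \<otimes>\<^bsub>DR A\<^esub> (euler j \<oplus>\<^bsub>DR A\<^esub> kscal (of_int (b j)))) e m" .
qed

lemma single_Dgr: assumes "P \<in> carrier (DR A)" "ksupp P \<subseteq> {b}"
  shows "P \<in> Dgr A b"
  unfolding Dgr_def
proof (intro CollectI conjI allI assms(1))
  fix j
  have c1: "euler j \<otimes>\<^bsub>DR A\<^esub> P \<in> carrier (DR A)" by (intro D.m_closed euler_carrier assms(1))
  have c2: "P \<otimes>\<^bsub>DR A\<^esub> euler j \<in> carrier (DR A)" by (intro D.m_closed euler_carrier assms(1))
  show "euler j \<otimes>\<^bsub>DR A\<^esub> P \<ominus>\<^bsub>DR A\<^esub> P \<otimes>\<^bsub>DR A\<^esub> euler j = kscal (of_int (b j)) \<otimes>\<^bsub>DR A\<^esub> P"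
  proof (intro ext)
    fix e m
    have "(euler j \<otimes>\<^bsub>DR A\<^esub> P \<ominus>\<^bsub>DR A\<^esub> P \<otimes>\<^bsub>DR A\<^esub> euler j) e m
        = P b m * (if e = b then of_int (m j) + of_int (b j) else 0) - of_int (m j) * P e m"
      using assms(2) c1 c2 unfolding minus_DR[OF c1 c2] mult_single[OF assms(2)] mult_diag[OF diag_euler]
      by (simp add: euler_def vadd_def)
    also have "\<dots> = of_int (b j) * P e m"
      using single_zero_off[OF assms(2)] by (auto simp: algebra_simps)
    finally show "(euler j \<otimes>\<^bsub>DR A\<^esub> P \<ominus>\<^bsub>DR A\<^esub> P \<otimes>\<^bsub>DR A\<^esub> euler j) e m
         = (kscal (of_int (b j)) \<otimes>\<^bsub>DR A\<^esub> P) e m"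
      using assms(1) by (simp add: kscal_mult_l)
  qed
qed

lemma hc_Dgr: "P \<in> carrier (DR A) \<Longrightarrow> hc b P \<in> Dgr A b"
  by (intro single_Dgr hc_carrier ksupp_hc)

lemma diag_Dgr: "P \<in> carrier (DR A) \<Longrightarrow> diag P \<Longrightarrow> P \<in> Dgr A (\<lambda>_. 0)"
  unfolding diag_def by (rule single_Dgr)

lemma diag_comm: assumes "diag P" "diag Q"
  shows "P \<otimes>\<^bsub>DR A\<^esub> Q = Q \<otimes>\<^bsub>DR A\<^esub> P"
proof (intro ext)
  fix e m
  show "(P \<otimes>\<^bsub>DR A\<^esub> Q) e m = (Q \<otimes>\<^bsub>DR A\<^esub> P) e m"
    using assms by (cases "e = (\<lambda>_. 0)") (auto simp: mult_diag diag_zero_off)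
qed

lemma opj_mult: "opj j (p * q) = opj j p \<otimes>\<^bsub>DR A\<^esub> opj j q"
  unfolding mult_diag[OF diag_opj] by (auto simp: opj_def intro!: ext)

lemma opj_add: "opj j (p + q) = opj j p \<oplus>\<^bsub>DR A\<^esub> opj j q"
  by (auto simp: opj_def intro!: ext)

lemma opj_smult: "opj j (smult a p) = kscal a \<otimes>\<^bsub>DR A\<^esub> opj j p"
  unfolding kscal_mult_l[OF opj_carrier] by (auto simp: opj_def intro!: ext)

lemma opj_const: "opj j [:c:] = kscal c"
  by (auto simp: opj_def kscal_def intro!: ext)

lemma opj_lin: "opj j [:-c, 1:] = euler j \<ominus>\<^bsub>DR A\<^esub> kscal c"
  unfolding minus_DR[OF euler_carrier kscal_carrier] by (auto simp: opj_def kscal_def euler_def intro!: ext)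

lemma opj_sum: assumes "finite S"
  shows "opj j (\<Sum>i\<in>S. f i) = finsum (DR A) (\<lambda>i. opj j (f i)) S"
proof -
  have pi: "(\<lambda>i. opj j (f i)) \<in> S \<rightarrow> carrier (DR A)" by (rule Pi_I, rule opj_carrier)
  show ?thesis unfolding finsum_DR[OF assms pi] by (auto simp: opj_def poly_sum intro!: ext)
qed

end

declare DR_simps(1)[simp del]

locale gmod =
  fixes A :: "('n::finite \<Rightarrow> int) set" and M :: "('n kern, 'm) module"
    and gr :: "('n \<Rightarrow> int) \<Rightarrow> 'm set"
  assumes gs: "graded_simple A M gr"
begin

lemma gm: "graded_module A M gr" using gs by (simp add: graded_simple_def)
lemma lm: "left_module (DR A) M" using gm by (simp add: graded_module_def)

sublocale L: left_module "DR A" M by (rule lm)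
sublocale drr A using lm unfolding left_module_def drr_def by blast

lemma gr_sub: "subgroup (gr a) (add_monoid M)" using gm by (simp add: graded_module_def)
lemma gr_carrier: "x \<in> gr a \<Longrightarrow> x \<in> carrier M"
  using subgroup.subset[OF gr_sub] by auto
lemma gr_zero: "\<zero>\<^bsub>M\<^esub> \<in> gr a"
  using subgroup.one_closed[OF gr_sub] by simp
lemma gr_add: "x \<in> gr a \<Longrightarrow> y \<in> gr a \<Longrightarrow> x \<oplus>\<^bsub>M\<^esub> y \<in> gr a"
  using subgroup.m_closed[OF gr_sub] by simp
lemma gr_act: "P \<in> Dgr A b \<Longrightarrow> x \<in> gr a \<Longrightarrow> P \<odot>\<^bsub>M\<^esub> x \<in> gr (vadd a b)"
  using gm by (simp add: graded_module_def)
lemma gr_diag: "P \<in> carrier (DR A) \<Longrightarrow> diag P \<Longrightarrow> x \<in> gr a \<Longrightarrow> P \<odot>\<^bsub>M\<^esub> x \<in> gr a"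
  using gr_act[OF diag_Dgr] by fastforce
lemma gr_kscal: "x \<in> gr a \<Longrightarrow> kscal c \<odot>\<^bsub>M\<^esub> x \<in> gr a"
  using gr_diag[OF kscal_carrier diag_kscal] by blast

lemma finsum_support: assumes "finite S" "{a. c a \<noteq> \<zero>\<^bsub>M\<^esub>} \<subseteq> S" "\<forall>a. c a \<in> carrier M"
  shows "finsum M c S = finsum M c {a. c a \<noteq> \<zero>\<^bsub>M\<^esub>}"
  by (rule L.add.finprod_mono_neutral_cong_left[symmetric]) (use assms in auto)

lemma uniq: assumes "\<forall>a. c a \<in> gr a" "finite S" "{a. c a \<noteq> \<zero>\<^bsub>M\<^esub>} \<subseteq> S"
    "\<forall>a. c' a \<in> gr a" "finite S'" "{a. c' a \<noteq> \<zero>\<^bsub>M\<^esub>} \<subseteq> S'"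
    "finsum M c S = finsum M c' S'"
  shows "c = c'"
proof -
  have cc: "\<forall>a. c a \<in> carrier M" "\<forall>a. c' a \<in> carrier M" using assms gr_carrier by blast+
  have x: "finsum M c S \<in> carrier M" using cc by (intro L.finsum_closed) auto
  have f1: "finite {a. c a \<noteq> \<zero>\<^bsub>M\<^esub>}" "finite {a. c' a \<noteq> \<zero>\<^bsub>M\<^esub>}"
    using assms finite_subset by blast+
  have e1: "finsum M c S = finsum M c {a. c a \<noteq> \<zero>\<^bsub>M\<^esub>}" using assms cc by (intro finsum_support) auto
  have e2: "finsum M c S = finsum M c' {a. c' a \<noteq> \<zero>\<^bsub>M\<^esub>}"
    using assms cc by (simp add: finsum_support)
  from gm x have "\<exists>!d. (\<forall>a. d a \<in> gr a) \<and> finite {a. d a \<noteq> \<zero>\<^bsub>M\<^esub>} \<and>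
                          finsum M c S = finsum M d {a. d a \<noteq> \<zero>\<^bsub>M\<^esub>}"
    unfolding graded_module_def by blast
  then show ?thesis using assms(1,4) f1 e1 e2 by blast
qed

lemma decomp: "x \<in> carrier M \<Longrightarrow> \<exists>c. (\<forall>a. c a \<in> gr a) \<and> finite {a. c a \<noteq> \<zero>\<^bsub>M\<^esub>} \<and>
                          x = finsum M c {a. c a \<noteq> \<zero>\<^bsub>M\<^esub>}"
  using gm unfolding graded_module_def by blast

lemma hc_zero: "b \<notin> ksupp P \<Longrightarrow> hc b P = \<zero>\<^bsub>DR A\<^esub>"
  by (auto simp: hc_def not_ksupp intro!: ext)

lemma act_decomp: assumes u: "u \<in> gr a" and P: "P \<in> carrier (DR A)"
  defines "c \<equiv> (\<lambda>a'. hc (vsub a' a) P \<odot>\<^bsub>M\<^esub> u)"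
  shows "(\<forall>a'. c a' \<in> gr a') \<and> finite {a'. c a' \<noteq> \<zero>\<^bsub>M\<^esub>} \<and> P \<odot>\<^bsub>M\<^esub> u = finsum M c {a'. c a' \<noteq> \<zero>\<^bsub>M\<^esub>}"
proof (intro conjI)
  have uc: "u \<in> carrier M" using u gr_carrier by blast
  show g: "\<forall>a'. c a' \<in> gr a'"
    unfolding c_def using gr_act[OF hc_Dgr[OF P] u] by (metis vadd_vsub)
  have fin: "finite (ksupp P)" using P by (simp add: DR_simps weyl_op_def)
  have sub: "{a'. c a' \<noteq> \<zero>\<^bsub>M\<^esub>} \<subseteq> vadd a ` ksupp P"
  proof
    fix a' assume "a' \<in> {a'. c a' \<noteq> \<zero>\<^bsub>M\<^esub>}"
    then have "vsub a' a \<in> ksupp P" unfolding c_def using hc_zero L.lsm_zero_l[OF uc] by fastforce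
    then show "a' \<in> vadd a ` ksupp P" by (metis image_eqI vadd_vsub)
  qed
  then show fs: "finite {a'. c a' \<noteq> \<zero>\<^bsub>M\<^esub>}" using fin finite_subset by blast
  have inj: "inj_on (vadd a) (ksupp P)" by (metis inj_onI vsub_vadd)
  have hcc: "(\<lambda>b. hc b P) \<in> ksupp P \<rightarrow> carrier (DR A)" using hc_carrier[OF P] by blast
  have "P \<odot>\<^bsub>M\<^esub> u = finsum (DR A) (\<lambda>b. hc b P) (ksupp P) \<odot>\<^bsub>M\<^esub> u"
    using hc_sum[OF P] by simp
  also have "\<dots> = finsum M (\<lambda>b. hc b P \<odot>\<^bsub>M\<^esub> u) (ksupp P)"
    by (rule L.lsm_finsum_l[OF fin uc hcc])
  also have "\<dots> = finsum M (\<lambda>b. c (vadd a b)) (ksupp P)"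
    by (intro L.finsum_cong') (auto simp: c_def intro!: L.lsmult_closed hc_carrier[OF P] uc)
  also have "\<dots> = finsum M c (vadd a ` ksupp P)"
    using g gr_carrier by (intro L.finsum_reindex[symmetric] inj) auto
  also have "\<dots> = finsum M c {a'. c a' \<noteq> \<zero>\<^bsub>M\<^esub>}"
    using fin sub g gr_carrier by (intro finsum_support) auto
  finally show "P \<odot>\<^bsub>M\<^esub> u = finsum M c {a'. c a' \<noteq> \<zero>\<^bsub>M\<^esub>}" .
qed

lemma orbit_submodule: assumes uc: "u \<in> carrier M"
  shows "submodule {P \<odot>\<^bsub>M\<^esub> u | P. P \<in> carrier (DR A)} (DR A) M"
  unfolding submodule_def submodule_axioms_def
proof (intro conjI allI impI)
  let ?N = "{P \<odot>\<^bsub>M\<^esub> u | P. P \<in> carrier (DR A)}"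
  show "subgroup ?N (add_monoid M)"
  proof
    show "?N \<subseteq> carrier (add_monoid M)" using uc L.lsmult_closed by auto
  next
    fix x y assume "x \<in> ?N" "y \<in> ?N"
    then obtain P Q where "P \<in> carrier (DR A)" "Q \<in> carrier (DR A)" "x = P \<odot>\<^bsub>M\<^esub> u" "y = Q \<odot>\<^bsub>M\<^esub> u"
      by blast
    then show "x \<otimes>\<^bsub>add_monoid M\<^esub> y \<in> ?N"
      using uc by (auto simp: L.lsmult_l_distr[symmetric] intro!: exI[of _ "P \<oplus>\<^bsub>DR A\<^esub> Q"])
  next
    show "\<one>\<^bsub>add_monoid M\<^esub> \<in> ?N"
      using L.lsm_zero_l[OF uc] by (auto intro!: exI[of _ "\<zero>\<^bsub>DR A\<^esub>"])
  next
    fix x assume "x \<in> ?N"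
    then obtain P where P: "P \<in> carrier (DR A)" "x = P \<odot>\<^bsub>M\<^esub> u" by blast
    have "inv\<^bsub>add_monoid M\<^esub> x = \<ominus>\<^bsub>M\<^esub> x" by (simp add: a_inv_def)
    also have "\<dots> = (\<ominus>\<^bsub>DR A\<^esub> P) \<odot>\<^bsub>M\<^esub> u" using P uc L.lsm_minus_l by simp
    finally show "inv\<^bsub>add_monoid M\<^esub> x \<in> ?N" using P(1) by blast
  qed
next
  fix a x
  assume "a \<in> carrier (DR A)" "x \<in> {P \<odot>\<^bsub>M\<^esub> u | P. P \<in> carrier (DR A)}"
  then obtain P where "a \<in> carrier (DR A)" "P \<in> carrier (DR A)" "x = P \<odot>\<^bsub>M\<^esub> u" by blast
  then show "a \<odot>\<^bsub>M\<^esub> x \<in> {P \<odot>\<^bsub>M\<^esub> u | P. P \<in> carrier (DR A)}"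
    using uc by (auto simp: L.lsmult_assoc1[symmetric] intro!: exI[of _ "a \<otimes>\<^bsub>DR A\<^esub> P"])
qed

lemma gen: assumes u: "u \<in> gr a" "u \<noteq> \<zero>\<^bsub>M\<^esub>" and x: "x \<in> carrier M"
  shows "\<exists>P \<in> carrier (DR A). x = P \<odot>\<^bsub>M\<^esub> u"
proof -
  let ?N = "{P \<odot>\<^bsub>M\<^esub> u | P. P \<in> carrier (DR A)}"
  have uc: "u \<in> carrier M" using u gr_carrier by blast
  have "graded_submodule A M gr ?N"
    unfolding graded_submodule_def
  proof (intro conjI ballI orbit_submodule[OF uc])
    fix y assume "y \<in> ?N"
    then obtain P where P: "P \<in> carrier (DR A)" "y = P \<odot>\<^bsub>M\<^esub> u" by blast
    let ?c = "\<lambda>a'. hc (vsub a' a) P \<odot>\<^bsub>M\<^esub> u"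
    have "(\<forall>a'. ?c a' \<in> gr a') \<and> finite {a'. ?c a' \<noteq> \<zero>\<^bsub>M\<^esub>} \<and> P \<odot>\<^bsub>M\<^esub> u = finsum M ?c {a'. ?c a' \<noteq> \<zero>\<^bsub>M\<^esub>}"
      by (rule act_decomp[OF u(1) P(1)])
    moreover have "\<forall>a'. ?c a' \<in> ?N" using hc_carrier[OF P(1)] by blast
    ultimately show "\<exists>c. (\<forall>a. c a \<in> gr a \<inter> ?N) \<and> finite {a. c a \<noteq> \<zero>\<^bsub>M\<^esub>} \<and> y = finsum M c {a. c a \<noteq> \<zero>\<^bsub>M\<^esub>}"
      using P(2) by (intro exI[of _ ?c]) blast
  qed
  then have "?N = {\<zero>\<^bsub>M\<^esub>} \<or> ?N = carrier M" using gs by (simp add: graded_simple_def)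
  moreover have "u \<in> ?N" using L.lsmult_one[OF uc] by (metis (mono_tags, lifting) L.R.one_closed mem_Collect_eq)
  ultimately have "?N = carrier M" using u(2) by blast
  then show ?thesis using x by blast
qed

lemma proj: assumes u: "u \<in> gr a" "u \<noteq> \<zero>\<^bsub>M\<^esub>" and w: "w \<in> gr a'"
  shows "\<exists>P \<in> carrier (DR A). ksupp P \<subseteq> {vsub a' a} \<and> w = P \<odot>\<^bsub>M\<^esub> u"
proof -
  obtain P where P: "P \<in> carrier (DR A)" "w = P \<odot>\<^bsub>M\<^esub> u" using gen[OF u] w gr_carrier by blast
  let ?c = "\<lambda>a''. hc (vsub a'' a) P \<odot>\<^bsub>M\<^esub> u"
  have d: "(\<forall>a'. ?c a' \<in> gr a') \<and> finite {a'. ?c a' \<noteq> \<zero>\<^bsub>M\<^esub>} \<and> P \<odot>\<^bsub>M\<^esub> u = finsum M ?c {a'. ?c a' \<noteq> \<zero>\<^bsub>M\<^esub>}"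
    by (rule act_decomp[OF u(1) P(1)])
  let ?c1 = "\<lambda>a''. if a'' = a' then w else \<zero>\<^bsub>M\<^esub>"
  have c1: "\<forall>a''. ?c1 a'' \<in> gr a''" using w gr_zero by auto
  have wc: "w \<in> carrier M" using w gr_carrier by blast
  have "finsum M ?c1 {a'} = w" using wc by (simp add: L.finsum_singleton)
  then have "?c1 = ?c"
    using d c1 P(2) by (intro uniq[of ?c1 "{a'}" ?c "{a'. ?c a' \<noteq> \<zero>\<^bsub>M\<^esub>}"]) auto
  then have "w = ?c a'" by (metis (mono_tags))
  then show ?thesis using hc_carrier[OF P(1)] ksupp_hc by blast
qed

end

lemma vsub_self[simp]: "vsub a a = (\<lambda>_. 0)" by (simp add: vsub_def)

definition ksc :: "complex \<Rightarrow> 'n kern \<Rightarrow> 'n kern" where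
  "ksc a P = (\<lambda>b m. a * P b m)"

interpretation VS: Vector_Spaces.vector_space "ksc :: complex \<Rightarrow> 'n kern \<Rightarrow> 'n kern"
  by unfold_locales (auto simp: ksc_def fun_eq_iff algebra_simps)

context gmod
begin

lemma minus_zero_eq: "x \<in> carrier M \<Longrightarrow> y \<in> carrier M \<Longrightarrow> x \<ominus>\<^bsub>M\<^esub> y = \<zero>\<^bsub>M\<^esub> \<Longrightarrow> x = y"
  by (metis L.M.add.inv_closed L.M.minus_eq L.M.r_neg2 L.M.r_zero L.M.a_comm L.M.minus_minus L.M.minus_add L.M.add.inv_equality)

lemma diag_gen: "u \<in> gr a \<Longrightarrow> u \<noteq> \<zero>\<^bsub>M\<^esub> \<Longrightarrow> w \<in> gr a \<Longrightarrow> \<exists>Q\<in>carrier (DR A). diag Q \<and> w = Q \<odot>\<^bsub>M\<^esub> u"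
  using proj[of u a w a] by (auto simp: diag_def)

lemma act_comm: "P \<in> carrier (DR A) \<Longrightarrow> Q \<in> carrier (DR A) \<Longrightarrow> diag P \<Longrightarrow> diag Q \<Longrightarrow> x \<in> carrier M
   \<Longrightarrow> P \<odot>\<^bsub>M\<^esub> (Q \<odot>\<^bsub>M\<^esub> x) = Q \<odot>\<^bsub>M\<^esub> (P \<odot>\<^bsub>M\<^esub> x)"
  by (simp add: L.lsmult_assoc1[symmetric] diag_comm)

lemma kscal_act_inv: assumes "c \<noteq> 0" "x \<in> carrier M" "kscal c \<odot>\<^bsub>M\<^esub> x = \<zero>\<^bsub>M\<^esub>"
  shows "x = \<zero>\<^bsub>M\<^esub>"
proof -
  have "x = kscal 1 \<odot>\<^bsub>M\<^esub> x" using assms(2) by (metis kscal_one L.lsmult_one)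
  also have "\<dots> = (kscal (1/c) \<otimes>\<^bsub>DR A\<^esub> kscal c) \<odot>\<^bsub>M\<^esub> x" using assms by (simp add: kscal_mult[symmetric])
  also have "\<dots> = \<zero>\<^bsub>M\<^esub>" using assms by (simp add: L.lsmult_assoc1 L.lsm_zero_r)
  finally show ?thesis .
qed

lemma poly_inj:
  assumes noroot: "\<forall>c u. u \<in> gr a \<and> u \<noteq> \<zero>\<^bsub>M\<^esub> \<longrightarrow> opj j [:-c, 1:] \<odot>\<^bsub>M\<^esub> u \<noteq> \<zero>\<^bsub>M\<^esub>"
  shows "q \<noteq> 0 \<Longrightarrow> u \<in> gr a \<Longrightarrow> u \<noteq> \<zero>\<^bsub>M\<^esub> \<Longrightarrow> opj j q \<odot>\<^bsub>M\<^esub> u \<noteq> \<zero>\<^bsub>M\<^esub>"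
proof (induct "degree q" arbitrary: q u rule: less_induct)
  case less
  have uc: "u \<in> carrier M" using less gr_carrier by blast
  show ?case
  proof (cases "degree q = 0")
    case True
    then obtain c where q: "q = [:c:]" by (rule degree_eq_zeroE)
    then have "c \<noteq> 0" using less by simp
    then show ?thesis using kscal_act_inv[OF _ uc] less q by (auto simp: opj_const)
  next
    case False
    have "\<not> (\<exists>a l. a \<noteq> 0 \<and> l = 0 \<and> q = pCons a l)" using False by auto
    then obtain r where "poly q r = 0" using fundamental_theorem_of_algebra_alt by blast
    then obtain q' where q': "q = [:-r, 1:] * q'" using poly_eq_0_iff_dvd by (metis dvdE)
    then have q'0: "q' \<noteq> 0" using less by auto
    have "degree q = degree [:-r, 1:] + degree q'" unfolding q' by (rule degree_mult_eq) (use q'0 in auto)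
    then have dq: "degree q' < degree q" by simp
    have y: "opj j q' \<odot>\<^bsub>M\<^esub> u \<in> gr a" using gr_diag[OF opj_carrier diag_opj less(3)] by blast
    have y0: "opj j q' \<odot>\<^bsub>M\<^esub> u \<noteq> \<zero>\<^bsub>M\<^esub>" using less(1)[OF dq q'0 less(3) less(4)] .
    have "opj j q \<odot>\<^bsub>M\<^esub> u = opj j [:-r, 1:] \<odot>\<^bsub>M\<^esub> (opj j q' \<odot>\<^bsub>M\<^esub> u)"
      unfolding q' opj_mult using uc by (simp add: L.lsmult_assoc1)
    then show ?thesis using noroot y y0 by simp
  qed
qed

lemma no_rel:
  assumes noroot: "\<forall>c u. u \<in> gr a \<and> u \<noteq> \<zero>\<^bsub>M\<^esub> \<longrightarrow> opj j [:-c, 1:] \<odot>\<^bsub>M\<^esub> u \<noteq> \<zero>\<^bsub>M\<^esub>"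
    and v: "v \<in> gr a" "v \<noteq> \<zero>\<^bsub>M\<^esub>"
    and Qc: "\<And>c. Qc c \<in> carrier (DR A) \<and> diag (Qc c) \<and> v = Qc c \<odot>\<^bsub>M\<^esub> (opj j [:-c, 1:] \<odot>\<^bsub>M\<^esub> v)"
    and C1: "finite C1" "c0 \<in> C1" "\<mu> c0 \<noteq> 0"
    and rel: "(\<Sum>c\<in>C1. ksc (\<mu> c) (Qc c)) = 0"
  shows False
proof -
  have vc: "v \<in> carrier M" using v gr_carrier by blast
  define pr :: "complex set \<Rightarrow> complex poly" where "pr S = (\<Prod>k\<in>S. [:-k, 1:])" for S
  define q where "q = (\<Sum>c\<in>C1. smult (\<mu> c) (pr (C1 - {c})))"
  define Rc where "Rc c = opj j (pr (C1 - {c}))" for c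
  define R where "R = opj j (pr C1)"
  have poly_pr: "poly (pr S) x = (\<Prod>k\<in>S. x - k)" for S x by (simp add: pr_def poly_prod)
  have "poly q c0 = (\<Sum>c\<in>C1. \<mu> c * poly (pr (C1 - {c})) c0)" by (simp add: q_def poly_sum)
  also have "\<dots> = \<mu> c0 * poly (pr (C1 - {c0})) c0"
  proof (rule sum.remove[OF C1(1,2), THEN trans])
    have "(\<Sum>c\<in>C1 - {c0}. \<mu> c * poly (pr (C1 - {c})) c0) = 0"
    proof (intro sum.neutral ballI)
      fix c assume "c \<in> C1 - {c0}"
      then have "c0 \<in> C1 - {c}" using C1 by auto
      then have "poly (pr (C1 - {c})) c0 = 0" unfolding poly_pr using C1(1)
        by (intro prod_zero) auto
      then show "\<mu> c * poly (pr (C1 - {c})) c0 = 0" by simp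
    qed
    then show "\<mu> c0 * poly (pr (C1 - {c0})) c0 + (\<Sum>c\<in>C1 - {c0}. \<mu> c * poly (pr (C1 - {c})) c0) =
        \<mu> c0 * poly (pr (C1 - {c0})) c0" by simp
  qed
  finally have "poly q c0 \<noteq> 0" using C1 by (simp add: poly_pr)
  then have q0: "q \<noteq> 0" by auto
  have Rsplit: "R = Rc c \<otimes>\<^bsub>DR A\<^esub> opj j [:-c, 1:]" if "c \<in> C1" for c
  proof -
    have e: "pr C1 = pr (C1 - {c}) * [:-c, 1:]" unfolding pr_def using C1(1) that
      by (simp add: prod.remove mult.commute)
    show ?thesis by (simp only: R_def Rc_def e opj_mult)
  qed
  have QR: "Qc c \<odot>\<^bsub>M\<^esub> (R \<odot>\<^bsub>M\<^esub> v) = Rc c \<odot>\<^bsub>M\<^esub> v" if "c \<in> C1" for c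
  proof -
    have tv: "opj j [:-c, 1:] \<odot>\<^bsub>M\<^esub> v \<in> carrier M" using vc by (intro L.lsmult_closed opj_carrier)
    have "Qc c \<odot>\<^bsub>M\<^esub> (R \<odot>\<^bsub>M\<^esub> v) = Qc c \<odot>\<^bsub>M\<^esub> (Rc c \<odot>\<^bsub>M\<^esub> (opj j [:-c, 1:] \<odot>\<^bsub>M\<^esub> v))"
      using Rsplit[OF that] vc by (simp add: Rc_def L.lsmult_assoc1)
    also have "\<dots> = Rc c \<odot>\<^bsub>M\<^esub> (Qc c \<odot>\<^bsub>M\<^esub> (opj j [:-c, 1:] \<odot>\<^bsub>M\<^esub> v))"
      using Qc[of c] tv unfolding Rc_def by (intro act_comm opj_carrier diag_opj) auto
    also have "\<dots> = Rc c \<odot>\<^bsub>M\<^esub> v" using Qc[of c] by simp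
    finally show ?thesis .
  qed
  have Rv: "R \<odot>\<^bsub>M\<^esub> v \<in> carrier M" unfolding R_def using vc by (intro L.lsmult_closed opj_carrier)
  have kq: "(\<lambda>c. kscal (\<mu> c) \<otimes>\<^bsub>DR A\<^esub> Qc c) \<in> C1 \<rightarrow> carrier (DR A)"
    using Qc by (auto intro!: L.R.m_closed kscal_carrier)
  have kr: "(\<lambda>c. kscal (\<mu> c) \<otimes>\<^bsub>DR A\<^esub> Rc c) \<in> C1 \<rightarrow> carrier (DR A)"
    unfolding Rc_def by (auto intro!: L.R.m_closed kscal_carrier opj_carrier)
  have "opj j q = finsum (DR A) (\<lambda>c. opj j (smult (\<mu> c) (pr (C1 - {c})))) C1"
    unfolding q_def by (rule opj_sum[OF C1(1)])
  also have "\<dots> = finsum (DR A) (\<lambda>c. kscal (\<mu> c) \<otimes>\<^bsub>DR A\<^esub> Rc c) C1"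
    unfolding Rc_def opj_smult ..
  finally have oq: "opj j q = finsum (DR A) (\<lambda>c. kscal (\<mu> c) \<otimes>\<^bsub>DR A\<^esub> Rc c) C1" .
  have "opj j q \<odot>\<^bsub>M\<^esub> v = finsum M (\<lambda>c. (kscal (\<mu> c) \<otimes>\<^bsub>DR A\<^esub> Rc c) \<odot>\<^bsub>M\<^esub> v) C1"
    unfolding oq by (rule L.lsm_finsum_l[OF C1(1) vc kr])
  also have "\<dots> = finsum M (\<lambda>c. (kscal (\<mu> c) \<otimes>\<^bsub>DR A\<^esub> Qc c) \<odot>\<^bsub>M\<^esub> (R \<odot>\<^bsub>M\<^esub> v)) C1"
  proof (intro L.finsum_cong')
    fix c assume c: "c \<in> C1"
    show "(kscal (\<mu> c) \<otimes>\<^bsub>DR A\<^esub> Rc c) \<odot>\<^bsub>M\<^esub> v = (kscal (\<mu> c) \<otimes>\<^bsub>DR A\<^esub> Qc c) \<odot>\<^bsub>M\<^esub> (R \<odot>\<^bsub>M\<^esub> v)"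
      using QR[OF c] Qc[of c] vc Rv unfolding Rc_def by (simp add: L.lsmult_assoc1)
  next
    show "(\<lambda>c. (kscal (\<mu> c) \<otimes>\<^bsub>DR A\<^esub> Qc c) \<odot>\<^bsub>M\<^esub> (R \<odot>\<^bsub>M\<^esub> v)) \<in> C1 \<rightarrow> carrier M"
      using kq Rv by (auto intro!: L.lsmult_closed)
  qed simp
  also have "\<dots> = finsum (DR A) (\<lambda>c. kscal (\<mu> c) \<otimes>\<^bsub>DR A\<^esub> Qc c) C1 \<odot>\<^bsub>M\<^esub> (R \<odot>\<^bsub>M\<^esub> v)"
    by (rule L.lsm_finsum_l[OF C1(1) Rv kq, symmetric])
  also have "finsum (DR A) (\<lambda>c. kscal (\<mu> c) \<otimes>\<^bsub>DR A\<^esub> Qc c) C1 = \<zero>\<^bsub>DR A\<^esub>"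
  proof -
    have "finsum (DR A) (\<lambda>c. kscal (\<mu> c) \<otimes>\<^bsub>DR A\<^esub> Qc c) C1 = (\<lambda>b m. \<Sum>c\<in>C1. (kscal (\<mu> c) \<otimes>\<^bsub>DR A\<^esub> Qc c) b m)"
      by (rule finsum_DR[OF C1(1) kq])
    also have "\<dots> = (\<lambda>b m. \<Sum>c\<in>C1. \<mu> c * Qc c b m)"
      using Qc by (simp add: kscal_mult_l)
    also have "\<dots> = (\<lambda>b m. (\<Sum>c\<in>C1. ksc (\<mu> c) (Qc c)) b m)"
      by (simp add: sum_kern_apply ksc_def)
    also have "\<dots> = \<zero>\<^bsub>DR A\<^esub>" using rel by simp
    finally show ?thesis .
  qed
  finally have "opj j q \<odot>\<^bsub>M\<^esub> v = \<zero>\<^bsub>DR A\<^esub> \<odot>\<^bsub>M\<^esub> (R \<odot>\<^bsub>M\<^esub> v)" .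
  then have "opj j q \<odot>\<^bsub>M\<^esub> v = \<zero>\<^bsub>M\<^esub>" using L.lsm_zero_l[OF Rv] by simp
  then show False using poly_inj[OF noroot q0 v] by simp
qed

end

lemma uncountable_fiber:
  fixes f :: "complex \<Rightarrow> 'a"
  assumes "\<forall>c. f c \<in> S" "countable S"
  shows "\<exists>y. infinite {c. f c = y}"
proof (rule ccontr)
  assume "\<not> (\<exists>y. infinite {c. f c = y})"
  then have fin: "\<forall>y. finite {c. f c = y}" by blast
  have "(UNIV :: complex set) = (\<Union>y\<in>S. {c. f c = y})" using assms(1) by auto
  moreover have "countable (\<Union>y\<in>S. {c. f c = y})"
    using assms(2) fin by (intro countable_UN) (auto intro: countable_finite)
  ultimately show False using uncountable_UNIV_complex by simp
qed

context gmod
begin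

lemma span_diag: assumes "P \<in> carrier (DR A)" "diag P"
  shows "\<exists>K. finite K \<and> P \<in> VS.span (monoker ` K)"
proof -
  obtain K c where K: "finite K" "P = (\<Sum>k\<in>K. (\<lambda>b m. c k * monoker k b m))"
    using diag_span[OF assms(2,1)] by blast
  have "P = (\<Sum>k\<in>K. ksc (c k) (monoker k))" using K(2) by (simp add: ksc_def)
  also have "\<dots> \<in> VS.span (monoker ` K)"
    by (intro VS.span_sum VS.span_scale VS.span_base) auto
  finally show ?thesis using K(1) by blast
qed

lemma eigen: assumes v: "v \<in> gr a" "v \<noteq> \<zero>\<^bsub>M\<^esub>"
  shows "\<exists>c. \<forall>w\<in>gr a. euler j \<odot>\<^bsub>M\<^esub> w = kscal c \<odot>\<^bsub>M\<^esub> w"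
proof (cases "\<exists>c u. u \<in> gr a \<and> u \<noteq> \<zero>\<^bsub>M\<^esub> \<and> opj j [:-c, 1:] \<odot>\<^bsub>M\<^esub> u = \<zero>\<^bsub>M\<^esub>")
  case True
  then obtain c u where u: "u \<in> gr a" "u \<noteq> \<zero>\<^bsub>M\<^esub>" "opj j [:-c, 1:] \<odot>\<^bsub>M\<^esub> u = \<zero>\<^bsub>M\<^esub>" by blast
  have uc: "u \<in> carrier M" using u gr_carrier by blast
  have "euler j \<odot>\<^bsub>M\<^esub> w = kscal c \<odot>\<^bsub>M\<^esub> w" if w: "w \<in> gr a" for w
  proof -
    obtain Q where Q: "Q \<in> carrier (DR A)" "diag Q" "w = Q \<odot>\<^bsub>M\<^esub> u" using diag_gen[OF u(1,2) w] by blast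
    have wc: "w \<in> carrier M" using w gr_carrier by blast
    have "opj j [:-c, 1:] \<odot>\<^bsub>M\<^esub> w = Q \<odot>\<^bsub>M\<^esub> (opj j [:-c, 1:] \<odot>\<^bsub>M\<^esub> u)"
      using act_comm[OF opj_carrier Q(1) diag_opj Q(2) uc] Q(3) by metis
    also have "\<dots> = \<zero>\<^bsub>M\<^esub>" by (simp only: u(3) L.lsm_zero_r[OF Q(1)])
    finally have e1: "opj j [:-c, 1:] \<odot>\<^bsub>M\<^esub> w = \<zero>\<^bsub>M\<^esub>" .
    have e2: "opj j [:-c, 1:] \<odot>\<^bsub>M\<^esub> w = euler j \<odot>\<^bsub>M\<^esub> w \<ominus>\<^bsub>M\<^esub> kscal c \<odot>\<^bsub>M\<^esub> w"
      unfolding opj_lin by (rule L.lsm_diff_l[OF euler_carrier kscal_carrier wc])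
    from e1 e2 have "euler j \<odot>\<^bsub>M\<^esub> w \<ominus>\<^bsub>M\<^esub> kscal c \<odot>\<^bsub>M\<^esub> w = \<zero>\<^bsub>M\<^esub>" by simp
    then show ?thesis
      by (rule minus_zero_eq[OF L.lsmult_closed[OF euler_carrier wc] L.lsmult_closed[OF kscal_carrier wc]])
  qed
  then show ?thesis by blast
next
  case False
  then have noroot: "\<forall>c u. u \<in> gr a \<and> u \<noteq> \<zero>\<^bsub>M\<^esub> \<longrightarrow> opj j [:-c, 1:] \<odot>\<^bsub>M\<^esub> u \<noteq> \<zero>\<^bsub>M\<^esub>" by blast
  have "\<forall>c. \<exists>Q. Q \<in> carrier (DR A) \<and> diag Q \<and> v = Q \<odot>\<^bsub>M\<^esub> (opj j [:-c, 1:] \<odot>\<^bsub>M\<^esub> v)"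
  proof
    fix c
    have t: "opj j [:-c, 1:] \<odot>\<^bsub>M\<^esub> v \<in> gr a" using gr_diag[OF opj_carrier diag_opj v(1)] .
    have t0: "opj j [:-c, 1:] \<odot>\<^bsub>M\<^esub> v \<noteq> \<zero>\<^bsub>M\<^esub>" using noroot v by blast
    show "\<exists>Q. Q \<in> carrier (DR A) \<and> diag Q \<and> v = Q \<odot>\<^bsub>M\<^esub> (opj j [:-c, 1:] \<odot>\<^bsub>M\<^esub> v)"
      using diag_gen[OF t t0 v(1)] by blast
  qed
  then obtain Qc where Qc: "\<And>c. Qc c \<in> carrier (DR A) \<and> diag (Qc c) \<and> v = Qc c \<odot>\<^bsub>M\<^esub> (opj j [:-c, 1:] \<odot>\<^bsub>M\<^esub> v)"
    by metis
  have "\<forall>c. \<exists>K. finite K \<and> Qc c \<in> VS.span (monoker ` K)" using span_diag Qc by blast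
  then obtain Kf where Kf: "\<And>c. finite (Kf c) \<and> Qc c \<in> VS.span (monoker ` Kf c)" by metis
  obtain K0 where K0: "infinite {c. Kf c = K0}"
    using uncountable_fiber[of Kf "{K. finite K}"] Kf countable_Collect_finite by blast
  obtain C0 where C0: "finite C0" "card C0 = Suc (card K0)" "C0 \<subseteq> {c. Kf c = K0}"
    using infinite_arbitrarily_large[OF K0] by blast
  have finK0: "finite K0"
  proof -
    obtain c where "c \<in> C0" using C0(2) by (metis card.empty ex_in_conv nat.distinct(1))
    then show ?thesis using C0(3) Kf[of c] by auto
  qed
  have "\<exists>C1 \<mu> c0. finite C1 \<and> c0 \<in> C1 \<and> \<mu> c0 \<noteq> 0 \<and> (\<Sum>c\<in>C1. ksc (\<mu> c) (Qc c)) = 0"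
  proof (cases "inj_on Qc C0")
    case True
    have sub: "Qc ` C0 \<subseteq> VS.span (monoker ` K0)" using Kf C0(3) by auto
    have "\<not> VS.independent (Qc ` C0)"
    proof
      assume ind: "VS.independent (Qc ` C0)"
      have "card (Qc ` C0) \<le> card (monoker ` K0)"
        using VS.independent_span_bound[OF _ ind sub] finK0 by blast
      moreover have "card (Qc ` C0) = Suc (card K0)" using card_image[OF True] C0(2) by simp
      moreover have "card (monoker ` K0) \<le> card K0" by (rule card_image_le[OF finK0])
      ultimately show False by simp
    qed
    then obtain u where u: "\<exists>x\<in>Qc ` C0. u x \<noteq> 0" "(\<Sum>x\<in>Qc ` C0. ksc (u x) x) = 0"
      using VS.dependent_finite[of "Qc ` C0"] C0(1) by blast
    then obtain c0 where c0: "c0 \<in> C0" "u (Qc c0) \<noteq> 0" by blast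
    have "(\<Sum>c\<in>C0. ksc (u (Qc c)) (Qc c)) = 0" using u(2) sum.reindex[OF True, of "\<lambda>x. ksc (u x) x"]
      by (simp add: comp_def)
    then show ?thesis using C0(1) c0 by (intro exI[of _ C0] exI[of _ "\<lambda>c. u (Qc c)"] exI[of _ c0]) auto
  next
    case False
    then obtain c c' where cc: "c \<in> C0" "c' \<in> C0" "c \<noteq> c'" "Qc c = Qc c'" unfolding inj_on_def by blast
    have "(\<Sum>x\<in>{c, c'}. ksc (if x = c then 1 else -1) (Qc x)) = 0"
      using cc by (auto simp: ksc_def fun_eq_iff)
    then show ?thesis
      by (intro exI[of _ "{c, c'}"] exI[of _ "\<lambda>x. if x = c then (1::complex) else -1"] exI[of _ c]) auto
  qed
  then obtain C1 \<mu> c0 where "finite C1" "c0 \<in> C1" "\<mu> c0 \<noteq> 0" "(\<Sum>c\<in>C1. ksc (\<mu> c) (Qc c)) = 0"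
    by blast
  then show ?thesis using no_rel[OF noroot v Qc] by blast
qed

end

context gmod
begin

lemma kscal_comm: "P \<in> carrier (DR A) \<Longrightarrow> P \<otimes>\<^bsub>DR A\<^esub> kscal c = kscal c \<otimes>\<^bsub>DR A\<^esub> P"
  by (simp add: kscal_mult_l kscal_mult_r)

lemma kscal_minus: "kscal c \<ominus>\<^bsub>DR A\<^esub> kscal d = kscal (c - d)"
  unfolding minus_DR[OF kscal_carrier kscal_carrier] by (auto simp: kscal_def intro!: ext)

lemma kscal_inv_act: assumes d: "d \<noteq> 0" and x: "x \<in> carrier M"
  shows "kscal (1/d) \<odot>\<^bsub>M\<^esub> (kscal d \<odot>\<^bsub>M\<^esub> x) = x"
proof -
  have "kscal (1/d) \<odot>\<^bsub>M\<^esub> (kscal d \<odot>\<^bsub>M\<^esub> x) = kscal (1/d * d) \<odot>\<^bsub>M\<^esub> x"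
    by (simp only: L.lsmult_assoc1[OF kscal_carrier kscal_carrier x, symmetric] kscal_mult)
  also have "1/d * d = 1" using d by simp
  also have "kscal 1 \<odot>\<^bsub>M\<^esub> x = x" by (simp only: kscal_one L.lsmult_one[OF x])
  finally show ?thesis .
qed

lemma kscal_act_sub: "x \<in> carrier M \<Longrightarrow> kscal c \<odot>\<^bsub>M\<^esub> x \<ominus>\<^bsub>M\<^esub> kscal d \<odot>\<^bsub>M\<^esub> x = kscal (c - d) \<odot>\<^bsub>M\<^esub> x"
  by (simp only: L.lsm_diff_l[OF kscal_carrier kscal_carrier, symmetric] kscal_minus)

lemma weight:
  assumes v: "v \<in> gr a0" "v \<noteq> \<zero>\<^bsub>M\<^esub>"
    and al: "\<forall>j. \<forall>w\<in>gr a0. euler j \<odot>\<^bsub>M\<^esub> w = kscal (\<alpha> j) \<odot>\<^bsub>M\<^esub> w"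
    and w: "w \<in> gr a"
  shows "euler j \<odot>\<^bsub>M\<^esub> w = kscal (\<alpha> j + of_int (a j - a0 j)) \<odot>\<^bsub>M\<^esub> w"
proof -
  obtain P where P: "P \<in> carrier (DR A)" "ksupp P \<subseteq> {vsub a a0}" "w = P \<odot>\<^bsub>M\<^esub> v"
    using proj[OF v w] by blast
  have vc: "v \<in> carrier M" using v gr_carrier by blast
  let ?b = "of_int (vsub a a0 j) :: complex"
  have bj: "?b = of_int (a j - a0 j)" by (simp add: vsub_def)
  have "euler j \<odot>\<^bsub>M\<^esub> w = (euler j \<otimes>\<^bsub>DR A\<^esub> P) \<odot>\<^bsub>M\<^esub> v"
    using P(1,3) vc by (simp add: L.lsmult_assoc1)
  also have "\<dots> = (P \<otimes>\<^bsub>DR A\<^esub> (euler j \<oplus>\<^bsub>DR A\<^esub> kscal ?b)) \<odot>\<^bsub>M\<^esub> v"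
    by (simp only: euler_comm[OF P(1,2)])
  also have "\<dots> = P \<odot>\<^bsub>M\<^esub> (euler j \<odot>\<^bsub>M\<^esub> v \<oplus>\<^bsub>M\<^esub> kscal ?b \<odot>\<^bsub>M\<^esub> v)"
    by (simp only: L.lsmult_assoc1[OF P(1) L.R.a_closed[OF euler_carrier kscal_carrier] vc]
         L.lsmult_l_distr[OF euler_carrier kscal_carrier vc])
  also have "\<dots> = P \<odot>\<^bsub>M\<^esub> (kscal (\<alpha> j + ?b) \<odot>\<^bsub>M\<^esub> v)"
    using al v(1) by (simp only: kscal_add L.lsmult_l_distr[OF kscal_carrier kscal_carrier vc])
  also have "\<dots> = kscal (\<alpha> j + ?b) \<odot>\<^bsub>M\<^esub> w"
    by (simp only: P(3) L.lsmult_assoc1[OF P(1) kscal_carrier vc, symmetric]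
          L.lsmult_assoc1[OF kscal_carrier P(1) vc, symmetric] kscal_comm[OF P(1)])
  finally show ?thesis unfolding bj .
qed

lemma separate:
  assumes v: "v \<in> gr a0" "v \<noteq> \<zero>\<^bsub>M\<^esub>"
    and al: "\<forall>j. \<forall>w\<in>gr a0. euler j \<odot>\<^bsub>M\<^esub> w = kscal (\<alpha> j) \<odot>\<^bsub>M\<^esub> w"
    and Wc: "W \<subseteq> carrier M"
    and Wadd: "\<And>x y. x \<in> W \<Longrightarrow> y \<in> W \<Longrightarrow> x \<oplus>\<^bsub>M\<^esub> y \<in> W"
    and Wact: "\<And>P x. P \<in> carrier (DR A) \<Longrightarrow> x \<in> W \<Longrightarrow> P \<odot>\<^bsub>M\<^esub> x \<in> W"
  shows "finite S \<Longrightarrow> \<forall>a\<in>S. c a \<in> gr a \<Longrightarrow> finsum M c S \<in> W \<Longrightarrow> a1 \<in> S \<Longrightarrow> c a1 \<in> W"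
proof (induct "card S" arbitrary: S c rule: less_induct)
  case less
  have cc: "\<forall>a\<in>S. c a \<in> carrier M" using less(3) gr_carrier by blast
  show ?case
  proof (cases "S = {a1}")
    case True
    then show ?thesis using less(4) cc by (simp add: L.finsum_singleton)
  next
    case False
    then obtain a' where a': "a' \<in> S" "a' \<noteq> a1" using less(5) by blast
    then obtain j where j: "a' j \<noteq> a1 j" by auto
    define t where "t = \<alpha> j + of_int (a' j - a0 j)"
    define E where "E = euler j \<ominus>\<^bsub>DR A\<^esub> kscal t"
    have Ec: "E \<in> carrier (DR A)" unfolding E_def by (intro L.R.minus_closed euler_carrier kscal_carrier)
    define c' where "c' a = kscal (of_int (a j - a' j)) \<odot>\<^bsub>M\<^esub> c a" for a
    have Ec': "E \<odot>\<^bsub>M\<^esub> c a = c' a" if "a \<in> S" for a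
    proof -
      have ca: "c a \<in> carrier M" using cc that by blast
      have "E \<odot>\<^bsub>M\<^esub> c a = euler j \<odot>\<^bsub>M\<^esub> c a \<ominus>\<^bsub>M\<^esub> kscal t \<odot>\<^bsub>M\<^esub> c a"
        unfolding E_def by (rule L.lsm_diff_l[OF euler_carrier kscal_carrier ca])
      also have "\<dots> = kscal (\<alpha> j + of_int (a j - a0 j)) \<odot>\<^bsub>M\<^esub> c a \<ominus>\<^bsub>M\<^esub> kscal t \<odot>\<^bsub>M\<^esub> c a"
        using weight[OF v al, of "c a" a j] less(3) that by simp
      also have "\<dots> = kscal (\<alpha> j + of_int (a j - a0 j) - t) \<odot>\<^bsub>M\<^esub> c a"
        by (rule kscal_act_sub[OF ca])
      also have "\<alpha> j + of_int (a j - a0 j) - t = of_int (a j - a' j)" by (simp add: t_def)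
      finally show ?thesis unfolding c'_def .
    qed
    have c'gr: "\<forall>a\<in>S. c' a \<in> gr a" using less(3) gr_kscal unfolding c'_def by blast
    have c'c: "\<forall>a\<in>S. c' a \<in> carrier M" using c'gr gr_carrier by blast
    have ca': "c a' \<in> carrier M" using cc a'(1) by blast
    have c'a': "c' a' = \<zero>\<^bsub>M\<^esub>" unfolding c'_def
      by (simp only: diff_self of_int_0 kscal_zero L.lsm_zero_l[OF ca'])
    have "E \<odot>\<^bsub>M\<^esub> finsum M c S = finsum M (\<lambda>a. E \<odot>\<^bsub>M\<^esub> c a) S"
      using cc less(2) by (intro L.lsm_finsum_r Ec) auto
    also have "\<dots> = finsum M c' S"
      using Ec' c'c by (intro L.finsum_cong') auto
    also have "\<dots> = c' a' \<oplus>\<^bsub>M\<^esub> finsum M c' (S - {a'})"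
    proof -
      have "S = insert a' (S - {a'})" using a' by blast
      then have "finsum M c' S = finsum M c' (insert a' (S - {a'}))" by simp
      also have "\<dots> = c' a' \<oplus>\<^bsub>M\<^esub> finsum M c' (S - {a'})"
        using c'c less(2) a'(1) by (intro L.finsum_insert) auto
      finally show ?thesis .
    qed
    also have "\<dots> = finsum M c' (S - {a'})"
      using c'c c'a' by (simp add: L.finsum_closed)
    finally have inW: "finsum M c' (S - {a'}) \<in> W" using Wact[OF Ec less(4)] by simp
    have "card (S - {a'}) < card S" using less(2) a'(1) by (rule card_Diff1_less)
    then have "c' a1 \<in> W" using less(1)[of "S - {a'}" c'] less(2) c'gr inW a' less(5) by auto
    then have "kscal (1 / of_int (a1 j - a' j)) \<odot>\<^bsub>M\<^esub> c' a1 \<in> W" by (intro Wact kscal_carrier)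
    moreover have "kscal (1 / of_int (a1 j - a' j)) \<odot>\<^bsub>M\<^esub> c' a1 = c a1"
      unfolding c'_def using j cc less(5) by (intro kscal_inv_act) auto
    ultimately show ?thesis by simp
  qed
qed

lemma simple_module:
  assumes v: "v \<in> gr a0" "v \<noteq> \<zero>\<^bsub>M\<^esub>"
    and al: "\<forall>j. \<forall>w\<in>gr a0. euler j \<odot>\<^bsub>M\<^esub> w = kscal (\<alpha> j) \<odot>\<^bsub>M\<^esub> w"
    and Wc: "W \<subseteq> carrier M"
    and Wadd: "\<And>x y. x \<in> W \<Longrightarrow> y \<in> W \<Longrightarrow> x \<oplus>\<^bsub>M\<^esub> y \<in> W"
    and Wact: "\<And>P x. P \<in> carrier (DR A) \<Longrightarrow> x \<in> W \<Longrightarrow> P \<odot>\<^bsub>M\<^esub> x \<in> W"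
    and x: "x \<in> W" "x \<noteq> \<zero>\<^bsub>M\<^esub>"
  shows "W = carrier M"
proof -
  obtain c where c: "\<forall>a. c a \<in> gr a" "finite {a. c a \<noteq> \<zero>\<^bsub>M\<^esub>}" "x = finsum M c {a. c a \<noteq> \<zero>\<^bsub>M\<^esub>}"
    using decomp[of x] x Wc by blast
  have "{a. c a \<noteq> \<zero>\<^bsub>M\<^esub>} \<noteq> {}"
  proof
    assume e: "{a. c a \<noteq> \<zero>\<^bsub>M\<^esub>} = {}"
    have "x = finsum M c {}" using c(3) unfolding e .
    then show False using x(2) by simp
  qed
  then obtain a1 where a1: "c a1 \<noteq> \<zero>\<^bsub>M\<^esub>" by blast
  have "c a1 \<in> W" using separate[OF v al Wc Wadd Wact c(2)] c(1) c(3) x(1) a1 by auto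
  then have "\<forall>y\<in>carrier M. y \<in> W" using gen[OF c(1)[rule_format, of a1] a1] Wact by blast
  then show ?thesis using Wc by blast
qed

end

declare DR_simps[simp del]

lemma comm_group_transfer:
  assumes "comm_group G" "carrier H = carrier G" "monoid.mult H = monoid.mult G" "monoid.one H = monoid.one G"
  shows "comm_group H"
proof -
  have "comm_group H = comm_group G"
    unfolding comm_group_def group_def group_axioms_def monoid_def comm_monoid_def
      comm_monoid_axioms_def Units_def
    by (simp only: assms(2-4))
  then show ?thesis using assms(1) by simp
qed

lemma verma_carrier: "carrier (verma A \<alpha>) = a_rcosets\<^bsub>DR A\<^esub> (verma_ideal A \<alpha>)"
  by (simp add: verma_def quot_module_def regmod_def A_RCOSETS_def RCOSETS_def r_coset_def)

lemma verma_add: "X \<oplus>\<^bsub>verma A \<alpha>\<^esub> Y = X <+>\<^bsub>DR A\<^esub> Y"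
  by (simp add: verma_def quot_module_def regmod_def set_add_def set_mult_def)

lemma verma_zero: "\<zero>\<^bsub>verma A \<alpha>\<^esub> = verma_ideal A \<alpha>"
  by (simp add: verma_def quot_module_def)

lemma verma_smult: "r \<odot>\<^bsub>verma A \<alpha>\<^esub> X = verma_ideal A \<alpha> +>\<^bsub>DR A\<^esub> (r \<otimes>\<^bsub>DR A\<^esub> (SOME x. x \<in> X))"
  by (simp add: verma_def quot_module_def regmod_def a_r_coset_def r_coset_def)

lemma q_carrier: "carrier (quot_module (verma A \<alpha>) N) = rcosets\<^bsub>add_monoid (verma A \<alpha>)\<^esub> N"
  by (simp add: quot_module_def A_RCOSETS_def)

lemma q_add: "X \<oplus>\<^bsub>quot_module (verma A \<alpha>) N\<^esub> Y = X <#>\<^bsub>add_monoid (verma A \<alpha>)\<^esub> Y"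
  by (simp add: quot_module_def set_add_def)

lemma q_smult: "r \<odot>\<^bsub>quot_module (verma A \<alpha>) N\<^esub> X =
   N #>\<^bsub>add_monoid (verma A \<alpha>)\<^esub> (r \<odot>\<^bsub>verma A \<alpha>\<^esub> (SOME x. x \<in> X))"
  by (simp add: quot_module_def a_r_coset_def)

locale gfix = gmod +
  fixes v a0 \<alpha>
  assumes v: "v \<in> gr a0" "v \<noteq> \<zero>\<^bsub>M\<^esub>"
    and al: "\<forall>j. \<forall>w\<in>gr a0. euler j \<odot>\<^bsub>M\<^esub> w = kscal (\<alpha> j) \<odot>\<^bsub>M\<^esub> w"
begin

abbreviation "I \<equiv> verma_ideal A \<alpha>"
abbreviation "E i \<equiv> euler i \<ominus>\<^bsub>DR A\<^esub> kscal (\<alpha> i)"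

lemma vc: "v \<in> carrier M" using v gr_carrier by blast

lemma E_carrier: "E i \<in> carrier (DR A)" by (intro L.R.minus_closed euler_carrier kscal_carrier)

lemma I_form: "P \<in> I \<longleftrightarrow> (\<exists>Pi. (\<forall>i. Pi i \<in> carrier (DR A)) \<and> P = finsum (DR A) (\<lambda>i. Pi i \<otimes>\<^bsub>DR A\<^esub> E i) UNIV)"
  by (auto simp: verma_ideal_def)

lemma I_carrier: "I \<subseteq> carrier (DR A)"
proof
  fix P assume "P \<in> I"
  then obtain Pi where "\<forall>i. Pi i \<in> carrier (DR A)" "P = finsum (DR A) (\<lambda>i. Pi i \<otimes>\<^bsub>DR A\<^esub> E i) UNIV"
    unfolding I_form by blast
  then show "P \<in> carrier (DR A)" using E_carrier by (auto intro!: L.R.finsum_closed L.R.m_closed)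
qed

lemma I_lmult: assumes R: "R \<in> carrier (DR A)" and P: "P \<in> I" shows "R \<otimes>\<^bsub>DR A\<^esub> P \<in> I"
proof -
  obtain Pi where Pi: "\<forall>i. Pi i \<in> carrier (DR A)" "P = finsum (DR A) (\<lambda>i. Pi i \<otimes>\<^bsub>DR A\<^esub> E i) UNIV"
    using P unfolding I_form by blast
  have "R \<otimes>\<^bsub>DR A\<^esub> P = finsum (DR A) (\<lambda>i. R \<otimes>\<^bsub>DR A\<^esub> (Pi i \<otimes>\<^bsub>DR A\<^esub> E i)) UNIV"
    unfolding Pi(2) using Pi(1) E_carrier R by (intro L.R.finsum_rdistr) auto
  also have "\<dots> = finsum (DR A) (\<lambda>i. (R \<otimes>\<^bsub>DR A\<^esub> Pi i) \<otimes>\<^bsub>DR A\<^esub> E i) UNIV"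
    using Pi(1) E_carrier R by (intro L.R.finsum_cong') (auto simp: L.R.m_assoc)
  finally show ?thesis unfolding I_form using Pi(1) R by (intro exI[of _ "\<lambda>i. R \<otimes>\<^bsub>DR A\<^esub> Pi i"]) auto
qed

lemma I_add: assumes P: "P \<in> I" and Q: "Q \<in> I" shows "P \<oplus>\<^bsub>DR A\<^esub> Q \<in> I"
proof -
  obtain Pi where Pi: "\<forall>i. Pi i \<in> carrier (DR A)" "P = finsum (DR A) (\<lambda>i. Pi i \<otimes>\<^bsub>DR A\<^esub> E i) UNIV"
    using P unfolding I_form by blast
  obtain Qi where Qi: "\<forall>i. Qi i \<in> carrier (DR A)" "Q = finsum (DR A) (\<lambda>i. Qi i \<otimes>\<^bsub>DR A\<^esub> E i) UNIV"
    using Q unfolding I_form by blast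
  have "P \<oplus>\<^bsub>DR A\<^esub> Q = finsum (DR A) (\<lambda>i. Pi i \<otimes>\<^bsub>DR A\<^esub> E i \<oplus>\<^bsub>DR A\<^esub> Qi i \<otimes>\<^bsub>DR A\<^esub> E i) UNIV"
    unfolding Pi(2) Qi(2) using Pi(1) Qi(1) E_carrier by (intro L.R.finsum_addf[symmetric]) auto
  also have "\<dots> = finsum (DR A) (\<lambda>i. (Pi i \<oplus>\<^bsub>DR A\<^esub> Qi i) \<otimes>\<^bsub>DR A\<^esub> E i) UNIV"
    using Pi(1) Qi(1) E_carrier by (intro L.R.finsum_cong') (auto simp: L.R.l_distr)
  finally show ?thesis unfolding I_form using Pi(1) Qi(1) by (intro exI[of _ "\<lambda>i. Pi i \<oplus>\<^bsub>DR A\<^esub> Qi i"]) auto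
qed

lemma I_zero: "\<zero>\<^bsub>DR A\<^esub> \<in> I"
proof -
  have X: "finsum (DR A) (\<lambda>i. \<one>\<^bsub>DR A\<^esub> \<otimes>\<^bsub>DR A\<^esub> E i) UNIV \<in> I"
    unfolding I_form by (intro exI[of _ "\<lambda>i. \<one>\<^bsub>DR A\<^esub>"]) auto
  then have "\<zero>\<^bsub>DR A\<^esub> \<otimes>\<^bsub>DR A\<^esub> finsum (DR A) (\<lambda>i. \<one>\<^bsub>DR A\<^esub> \<otimes>\<^bsub>DR A\<^esub> E i) UNIV \<in> I"
    by (intro I_lmult) auto
  moreover have "finsum (DR A) (\<lambda>i. \<one>\<^bsub>DR A\<^esub> \<otimes>\<^bsub>DR A\<^esub> E i) UNIV \<in> carrier (DR A)"
    using X I_carrier by blast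
  ultimately show ?thesis by (simp add: L.R.l_null)
qed

lemma I_neg: assumes P: "P \<in> I" shows "\<ominus>\<^bsub>DR A\<^esub> P \<in> I"
proof -
  have Pc: "P \<in> carrier (DR A)" using P I_carrier by blast
  have "\<ominus>\<^bsub>DR A\<^esub> P = (\<ominus>\<^bsub>DR A\<^esub> \<one>\<^bsub>DR A\<^esub>) \<otimes>\<^bsub>DR A\<^esub> P"
    by (simp only: L.R.l_minus[OF L.R.one_closed Pc] L.R.l_one[OF Pc])
  then show ?thesis using I_lmult[OF _ P] by (metis L.R.add.inv_closed L.R.one_closed)
qed

lemma I_subgroup: "subgroup I (add_monoid (DR A))"
proof
  show "I \<subseteq> carrier (add_monoid (DR A))" using I_carrier by simp
next
  fix x y assume "x \<in> I" "y \<in> I" then show "x \<otimes>\<^bsub>add_monoid (DR A)\<^esub> y \<in> I" using I_add by simp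
next
  show "\<one>\<^bsub>add_monoid (DR A)\<^esub> \<in> I" using I_zero by simp
next
  fix x assume "x \<in> I" then show "inv\<^bsub>add_monoid (DR A)\<^esub> x \<in> I" using I_neg by (simp add: a_inv_def)
qed

lemma I_abelian: "abelian_subgroup I (DR A)"
  by (rule abelian_subgroupI3[OF _ L.R.abelian_group_axioms]) (unfold additive_subgroup_def, rule I_subgroup)

lemma I_kill: assumes P: "P \<in> I" shows "P \<odot>\<^bsub>M\<^esub> v = \<zero>\<^bsub>M\<^esub>"
proof -
  obtain Pi where Pi: "\<forall>i. Pi i \<in> carrier (DR A)" "P = finsum (DR A) (\<lambda>i. Pi i \<otimes>\<^bsub>DR A\<^esub> E i) UNIV"
    using P unfolding I_form by blast
  have Ev: "E i \<odot>\<^bsub>M\<^esub> v = \<zero>\<^bsub>M\<^esub>" for i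
  proof -
    have "E i \<odot>\<^bsub>M\<^esub> v = euler i \<odot>\<^bsub>M\<^esub> v \<ominus>\<^bsub>M\<^esub> kscal (\<alpha> i) \<odot>\<^bsub>M\<^esub> v"
      by (rule L.lsm_diff_l[OF euler_carrier kscal_carrier vc])
    also have "\<dots> = kscal (\<alpha> i) \<odot>\<^bsub>M\<^esub> v \<ominus>\<^bsub>M\<^esub> kscal (\<alpha> i) \<odot>\<^bsub>M\<^esub> v" using al v(1) by simp
    also have "\<dots> = \<zero>\<^bsub>M\<^esub>" using vc by (simp add: L.M.r_neg L.M.minus_eq L.lsmult_closed)
    finally show ?thesis .
  qed
  have "P \<odot>\<^bsub>M\<^esub> v = finsum M (\<lambda>i. (Pi i \<otimes>\<^bsub>DR A\<^esub> E i) \<odot>\<^bsub>M\<^esub> v) UNIV"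
    unfolding Pi(2) using Pi(1) E_carrier by (intro L.lsm_finsum_l vc) auto
  also have "\<dots> = finsum M (\<lambda>i. Pi i \<odot>\<^bsub>M\<^esub> \<zero>\<^bsub>M\<^esub>) UNIV"
    apply (rule L.finsum_cong')
    using Pi(1) E_carrier Ev vc by (auto simp: L.lsmult_assoc1 intro: L.lsmult_closed)
  also have "\<dots> = \<zero>\<^bsub>M\<^esub>" using Pi(1) by (simp add: L.lsm_zero_r)
  finally show ?thesis .
qed

end

context gfix
begin

sublocale IA: abelian_subgroup "verma_ideal A \<alpha>" "DR A" by (rule I_abelian)

lemma coset_elim: "X \<in> carrier (verma A \<alpha>) \<Longrightarrow> \<exists>P\<in>carrier (DR A). X = I +>\<^bsub>DR A\<^esub> P"
  by (auto simp: verma_carrier A_RCOSETS_def RCOSETS_def a_r_coset_def)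

lemma coset_intro: "P \<in> carrier (DR A) \<Longrightarrow> I +>\<^bsub>DR A\<^esub> P \<in> carrier (verma A \<alpha>)"
  by (auto simp: verma_carrier A_RCOSETS_def RCOSETS_def a_r_coset_def)

lemma coset_mem: "x \<in> I +>\<^bsub>DR A\<^esub> P \<Longrightarrow> \<exists>h\<in>I. x = h \<oplus>\<^bsub>DR A\<^esub> P"
  by (auto simp: a_r_coset_def r_coset_def)

lemma coset_self: "P \<in> carrier (DR A) \<Longrightarrow> P \<in> I +>\<^bsub>DR A\<^esub> P"
  unfolding a_r_coset_def r_coset_def using I_zero by (force simp: L.R.l_zero)

definition phib :: "'a kern set \<Rightarrow> 'b" where "phib X = (SOME P. P \<in> X) \<odot>\<^bsub>M\<^esub> v"

lemma some_coset: assumes P: "P \<in> carrier (DR A)"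
  shows "(SOME x. x \<in> I +>\<^bsub>DR A\<^esub> P) \<in> carrier (DR A) \<and> (SOME x. x \<in> I +>\<^bsub>DR A\<^esub> P) \<odot>\<^bsub>M\<^esub> v = P \<odot>\<^bsub>M\<^esub> v"
proof -
  let ?x = "SOME x. x \<in> I +>\<^bsub>DR A\<^esub> P"
  have "?x \<in> I +>\<^bsub>DR A\<^esub> P" using coset_self[OF P] by (rule someI[where x = P])
  then obtain h where h: "h \<in> I" "?x = h \<oplus>\<^bsub>DR A\<^esub> P" using coset_mem by blast
  have hc: "h \<in> carrier (DR A)" using h I_carrier by blast
  have "?x \<odot>\<^bsub>M\<^esub> v = h \<odot>\<^bsub>M\<^esub> v \<oplus>\<^bsub>M\<^esub> P \<odot>\<^bsub>M\<^esub> v" using h(2) hc P vc by (simp add: L.lsmult_l_distr)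
  also have "\<dots> = P \<odot>\<^bsub>M\<^esub> v" using I_kill[OF h(1)] P vc by (simp add: L.lsmult_closed)
  finally show ?thesis using h(2) hc P by simp
qed

lemma phib_coset: "P \<in> carrier (DR A) \<Longrightarrow> phib (I +>\<^bsub>DR A\<^esub> P) = P \<odot>\<^bsub>M\<^esub> v"
  using some_coset unfolding phib_def by blast

lemma phib_carrier: "X \<in> carrier (verma A \<alpha>) \<Longrightarrow> phib X \<in> carrier M"
  using coset_elim phib_coset vc L.lsmult_closed by metis

lemma phib_add: assumes X: "X \<in> carrier (verma A \<alpha>)" and Y: "Y \<in> carrier (verma A \<alpha>)"
  shows "X \<oplus>\<^bsub>verma A \<alpha>\<^esub> Y \<in> carrier (verma A \<alpha>) \<and> phib (X \<oplus>\<^bsub>verma A \<alpha>\<^esub> Y) = phib X \<oplus>\<^bsub>M\<^esub> phib Y"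
proof -
  obtain P where P: "P \<in> carrier (DR A)" "X = I +>\<^bsub>DR A\<^esub> P" using coset_elim[OF X] by blast
  obtain Q where Q: "Q \<in> carrier (DR A)" "Y = I +>\<^bsub>DR A\<^esub> Q" using coset_elim[OF Y] by blast
  have e: "X \<oplus>\<^bsub>verma A \<alpha>\<^esub> Y = I +>\<^bsub>DR A\<^esub> (P \<oplus>\<^bsub>DR A\<^esub> Q)"
    unfolding verma_add P(2) Q(2) by (rule IA.a_rcos_sum[OF P(1) Q(1)])
  have PQ: "P \<oplus>\<^bsub>DR A\<^esub> Q \<in> carrier (DR A)" using P Q by simp
  have pX: "phib X = P \<odot>\<^bsub>M\<^esub> v" using phib_coset P by simp
  have pY: "phib Y = Q \<odot>\<^bsub>M\<^esub> v" using phib_coset Q by simp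
  show ?thesis unfolding e phib_coset[OF PQ] pX pY
    using coset_intro[OF PQ] P Q vc by (simp add: L.lsmult_l_distr)
qed

lemma phib_smult: assumes r: "r \<in> carrier (DR A)" and X: "X \<in> carrier (verma A \<alpha>)"
  shows "r \<odot>\<^bsub>verma A \<alpha>\<^esub> X \<in> carrier (verma A \<alpha>) \<and> phib (r \<odot>\<^bsub>verma A \<alpha>\<^esub> X) = r \<odot>\<^bsub>M\<^esub> phib X"
proof -
  obtain P where P: "P \<in> carrier (DR A)" "X = I +>\<^bsub>DR A\<^esub> P" using coset_elim[OF X] by blast
  let ?x = "SOME x. x \<in> X"
  have x: "?x \<in> carrier (DR A)" "?x \<odot>\<^bsub>M\<^esub> v = P \<odot>\<^bsub>M\<^esub> v" using some_coset[OF P(1)] P(2) by auto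
  have rx: "r \<otimes>\<^bsub>DR A\<^esub> ?x \<in> carrier (DR A)" using r x by simp
  have e: "r \<odot>\<^bsub>verma A \<alpha>\<^esub> X = I +>\<^bsub>DR A\<^esub> (r \<otimes>\<^bsub>DR A\<^esub> ?x)" by (rule verma_smult)
  show ?thesis unfolding e phib_coset[OF rx]
    using coset_intro[OF rx] r x vc P by (simp add: L.lsmult_assoc1 phib_coset)
qed

lemma I_eq: "I = I +>\<^bsub>DR A\<^esub> \<zero>\<^bsub>DR A\<^esub>" using L.R.a_coset_add_zero[OF I_carrier] by simp

lemma I_in: "I \<in> carrier (verma A \<alpha>)" using coset_intro[of "\<zero>\<^bsub>DR A\<^esub>"] I_eq by simp

lemma phib_I: "phib I = \<zero>\<^bsub>M\<^esub>"
  using phib_coset[of "\<zero>\<^bsub>DR A\<^esub>"] I_eq L.lsm_zero_l[OF vc] by simp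

lemma phib_eq: assumes X: "X \<in> carrier (verma A \<alpha>)" and Y: "Y \<in> carrier (verma A \<alpha>)"
    and eq: "phib X = phib Y"
  shows "\<exists>Z. Z \<in> carrier (verma A \<alpha>) \<and> phib Z = \<zero>\<^bsub>M\<^esub> \<and> Y = Z \<oplus>\<^bsub>verma A \<alpha>\<^esub> X"
proof -
  obtain P where P: "P \<in> carrier (DR A)" "X = I +>\<^bsub>DR A\<^esub> P" using coset_elim[OF X] by blast
  obtain Q where Q: "Q \<in> carrier (DR A)" "Y = I +>\<^bsub>DR A\<^esub> Q" using coset_elim[OF Y] by blast
  have QP: "Q \<ominus>\<^bsub>DR A\<^esub> P \<in> carrier (DR A)" using P Q by (simp add: L.R.minus_closed)
  have "(Q \<ominus>\<^bsub>DR A\<^esub> P) \<oplus>\<^bsub>DR A\<^esub> P = Q" using P Q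
    by (simp add: L.R.minus_eq L.R.a_assoc L.R.l_neg)
  then have e: "(I +>\<^bsub>DR A\<^esub> (Q \<ominus>\<^bsub>DR A\<^esub> P)) \<oplus>\<^bsub>verma A \<alpha>\<^esub> X = Y"
    unfolding verma_add P(2) Q(2) IA.a_rcos_sum[OF QP P(1)] by simp
  have "phib (I +>\<^bsub>DR A\<^esub> (Q \<ominus>\<^bsub>DR A\<^esub> P)) = Q \<odot>\<^bsub>M\<^esub> v \<ominus>\<^bsub>M\<^esub> P \<odot>\<^bsub>M\<^esub> v"
    unfolding phib_coset[OF QP] by (rule L.lsm_diff_l[OF Q(1) P(1) vc])
  also have "\<dots> = \<zero>\<^bsub>M\<^esub>" using eq P Q vc
    by (simp add: phib_coset L.M.minus_eq L.M.r_neg L.lsmult_closed)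
  finally show ?thesis using e coset_intro[OF QP] by metis
qed

end

context gfix
begin

abbreviation "G1 \<equiv> add_monoid (verma A \<alpha>)"

lemma G1_comm: "comm_group G1"
proof (rule comm_group_transfer[OF IA.a_factorgroup_is_comm_group])
  show "carrier G1 = carrier (DR A A_Mod I)"
    by (simp add: A_FactGroup_def FactGroup_def A_RCOSETS_def verma_carrier)
  show "monoid.mult G1 = monoid.mult (DR A A_Mod I)"
    by (auto simp: A_FactGroup_def FactGroup_def set_add_def verma_add intro!: ext)
  show "monoid.one G1 = monoid.one (DR A A_Mod I)"
    by (simp add: A_FactGroup_def FactGroup_def verma_zero)
qed

sublocale Q1: comm_group G1 by (rule G1_comm)

definition N :: "'a kern set set" where "N = {X \<in> carrier (verma A \<alpha>). phib X = \<zero>\<^bsub>M\<^esub>}"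

lemma N_subgroup: "subgroup N G1"
proof (rule Q1.subgroupI)
  show "N \<subseteq> carrier G1" by (auto simp: N_def)
  show "N \<noteq> {}" using I_in phib_I by (auto simp: N_def)
next
  fix X assume X: "X \<in> N"
  then have Xc: "X \<in> carrier (verma A \<alpha>)" and X0: "phib X = \<zero>\<^bsub>M\<^esub>" by (auto simp: N_def)
  have Yc: "inv\<^bsub>G1\<^esub> X \<in> carrier (verma A \<alpha>)" using Q1.inv_closed[of X] Xc by simp
  have "X \<oplus>\<^bsub>verma A \<alpha>\<^esub> inv\<^bsub>G1\<^esub> X = I" using Q1.r_inv[of X] Xc by (simp add: verma_zero)
  then have "phib X \<oplus>\<^bsub>M\<^esub> phib (inv\<^bsub>G1\<^esub> X) = \<zero>\<^bsub>M\<^esub>" using phib_add[OF Xc Yc] phib_I by simp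
  then have "phib (inv\<^bsub>G1\<^esub> X) = \<zero>\<^bsub>M\<^esub>" using X0 phib_carrier[OF Yc] by simp
  then show "inv\<^bsub>G1\<^esub> X \<in> N" using Yc by (simp add: N_def)
next
  fix X Y assume "X \<in> N" "Y \<in> N"
  then show "X \<otimes>\<^bsub>G1\<^esub> Y \<in> N" using phib_add by (auto simp: N_def)
qed

lemma N_normal: "N \<lhd> G1" by (rule Q1.subgroup_imp_normal[OF N_subgroup])

lemma N_submodule: "submodule N (DR A) (verma A \<alpha>)"
  unfolding submodule_def submodule_axioms_def
proof (intro conjI N_subgroup allI impI)
  fix a X assume "a \<in> carrier (DR A)" "X \<in> N"
  then show "a \<odot>\<^bsub>verma A \<alpha>\<^esub> X \<in> N" using phib_smult L.lsm_zero_r by (auto simp: N_def)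
qed

lemma N_proper: "N \<noteq> carrier (verma A \<alpha>)"
proof
  assume e: "N = carrier (verma A \<alpha>)"
  have "I +>\<^bsub>DR A\<^esub> \<one>\<^bsub>DR A\<^esub> \<in> N" unfolding e by (rule coset_intro) simp
  then have "\<one>\<^bsub>DR A\<^esub> \<odot>\<^bsub>M\<^esub> v = \<zero>\<^bsub>M\<^esub>" using phib_coset[of "\<one>\<^bsub>DR A\<^esub>"] by (simp add: N_def)
  then show False using v(2) L.lsmult_one[OF vc] by simp
qed

lemma N_maximal: "maximal_submodule (DR A) (verma A \<alpha>) N"
  unfolding maximal_submodule_def
proof (intro conjI N_submodule N_proper allI impI)
  fix N' assume as: "submodule N' (DR A) (verma A \<alpha>) \<and> N \<subseteq> N'"
  then have sg: "subgroup N' G1" and sm: "\<And>a X. a \<in> carrier (DR A) \<Longrightarrow> X \<in> N' \<Longrightarrow> a \<odot>\<^bsub>verma A \<alpha>\<^esub> X \<in> N'"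
    and NN': "N \<subseteq> N'"
    unfolding submodule_def submodule_axioms_def by auto
  have N'c: "N' \<subseteq> carrier (verma A \<alpha>)" using subgroup.subset[OF sg] by simp
  have N'add: "X \<oplus>\<^bsub>verma A \<alpha>\<^esub> Y \<in> N'" if "X \<in> N'" "Y \<in> N'" for X Y
    using subgroup.m_closed[OF sg that] by simp
  let ?W = "phib ` N'"
  show "N' = N \<or> N' = carrier (verma A \<alpha>)"
  proof (cases "\<exists>x\<in>?W. x \<noteq> \<zero>\<^bsub>M\<^esub>")
    case True
    then obtain x where x: "x \<in> ?W" "x \<noteq> \<zero>\<^bsub>M\<^esub>" by blast
    have Wc: "?W \<subseteq> carrier M" using N'c phib_carrier by blast
    have Wadd: "\<And>x y. x \<in> ?W \<Longrightarrow> y \<in> ?W \<Longrightarrow> x \<oplus>\<^bsub>M\<^esub> y \<in> ?W"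
    proof -
      fix x y assume "x \<in> ?W" "y \<in> ?W"
      then obtain X Y where XY: "X \<in> N'" "Y \<in> N'" "x = phib X" "y = phib Y" by blast
      have "X \<in> carrier (verma A \<alpha>)" "Y \<in> carrier (verma A \<alpha>)" using XY N'c by auto
      then have "x \<oplus>\<^bsub>M\<^esub> y = phib (X \<oplus>\<^bsub>verma A \<alpha>\<^esub> Y)" using phib_add XY(3,4) by simp
      then show "x \<oplus>\<^bsub>M\<^esub> y \<in> ?W" using N'add[OF XY(1,2)] by blast
    qed
    have Wact: "\<And>P x. P \<in> carrier (DR A) \<Longrightarrow> x \<in> ?W \<Longrightarrow> P \<odot>\<^bsub>M\<^esub> x \<in> ?W"
    proof -
      fix P x assume P: "P \<in> carrier (DR A)" and "x \<in> ?W"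
      then obtain X where X: "X \<in> N'" "x = phib X" by blast
      then have "P \<odot>\<^bsub>M\<^esub> x = phib (P \<odot>\<^bsub>verma A \<alpha>\<^esub> X)" using phib_smult[OF P] N'c by auto
      then show "P \<odot>\<^bsub>M\<^esub> x \<in> ?W" using sm[OF P X(1)] by blast
    qed
    have W: "?W = carrier M" by (rule simple_module[OF v al Wc Wadd Wact x])
    have "carrier (verma A \<alpha>) \<subseteq> N'"
    proof
      fix Y assume Y: "Y \<in> carrier (verma A \<alpha>)"
      then have "phib Y \<in> ?W" using W phib_carrier by blast
      then obtain X where X: "X \<in> N'" "phib X = phib Y" by auto
      obtain Z where Z: "Z \<in> carrier (verma A \<alpha>)" "phib Z = \<zero>\<^bsub>M\<^esub>" "Y = Z \<oplus>\<^bsub>verma A \<alpha>\<^esub> X"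
        using phib_eq[OF _ Y X(2)] X(1) N'c by blast
      have "Z \<in> N'" using Z NN' by (auto simp: N_def)
      then show "Y \<in> N'" using N'add X(1) Z(3) by simp
    qed
    then show ?thesis using N'c by blast
  next
    case False
    then have "N' \<subseteq> N" using N'c by (auto simp: N_def)
    then show ?thesis using NN' by blast
  qed
qed

definition fiso :: "'a kern set set \<Rightarrow> 'b" where "fiso Y = phib (SOME X. X \<in> Y)"

lemma cos_char: assumes X: "X \<in> carrier (verma A \<alpha>)"
  shows "X \<in> N #>\<^bsub>G1\<^esub> X" "\<And>Y. Y \<in> N #>\<^bsub>G1\<^esub> X \<Longrightarrow> Y \<in> carrier (verma A \<alpha>) \<and> phib Y = phib X"
proof -
  show "X \<in> N #>\<^bsub>G1\<^esub> X" using Q1.rcos_self[OF _ N_subgroup] X by simp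
next
  fix Y assume "Y \<in> N #>\<^bsub>G1\<^esub> X"
  then obtain h where h: "h \<in> N" "Y = h \<oplus>\<^bsub>verma A \<alpha>\<^esub> X" by (auto simp: r_coset_def)
  then have hc: "h \<in> carrier (verma A \<alpha>)" "phib h = \<zero>\<^bsub>M\<^esub>" by (auto simp: N_def)
  show "Y \<in> carrier (verma A \<alpha>) \<and> phib Y = phib X"
    using phib_add[OF hc(1) X] h(2) hc(2) phib_carrier[OF X] by simp
qed

lemma fiso_cos: assumes X: "X \<in> carrier (verma A \<alpha>)" shows "fiso (N #>\<^bsub>G1\<^esub> X) = phib X"
proof -
  have "(SOME Y. Y \<in> N #>\<^bsub>G1\<^esub> X) \<in> N #>\<^bsub>G1\<^esub> X" using cos_char(1)[OF X] by (rule someI[where x = X])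
  then show ?thesis unfolding fiso_def using cos_char(2)[OF X] by blast
qed

lemma iso: "module_iso (DR A) (quot_module (verma A \<alpha>) N) M fiso"
  unfolding module_iso_def q_carrier
proof (intro conjI ballI)
  have rc: "rcosets\<^bsub>G1\<^esub> N = {N #>\<^bsub>G1\<^esub> X | X. X \<in> carrier (verma A \<alpha>)}"
    by (auto simp: RCOSETS_def)
  show "bij_betw fiso (rcosets\<^bsub>G1\<^esub> N) (carrier M)"
    unfolding bij_betw_def
  proof
    show "inj_on fiso (rcosets\<^bsub>G1\<^esub> N)"
    proof (rule inj_onI)
      fix Y1 Y2 assume "Y1 \<in> rcosets\<^bsub>G1\<^esub> N" "Y2 \<in> rcosets\<^bsub>G1\<^esub> N" and f: "fiso Y1 = fiso Y2"
      then obtain X1 X2 where X: "X1 \<in> carrier (verma A \<alpha>)" "X2 \<in> carrier (verma A \<alpha>)"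
        "Y1 = N #>\<^bsub>G1\<^esub> X1" "Y2 = N #>\<^bsub>G1\<^esub> X2" unfolding rc by blast
      then have "phib X1 = phib X2" using f fiso_cos by simp
      then obtain Z where Z: "Z \<in> carrier (verma A \<alpha>)" "phib Z = \<zero>\<^bsub>M\<^esub>" "X2 = Z \<oplus>\<^bsub>verma A \<alpha>\<^esub> X1"
        using phib_eq X by blast
      have "Z \<in> N" using Z by (simp add: N_def)
      then have "X2 \<in> N #>\<^bsub>G1\<^esub> X1" using Q1.rcosI[of Z N X1] X(1) Z(3) by (simp add: N_def subset_iff)
      then show "Y1 = Y2" using Q1.repr_independence[OF _ _ N_subgroup] X by simp
    qed
  next
    show "fiso ` (rcosets\<^bsub>G1\<^esub> N) = carrier M"
    proof
      show "fiso ` (rcosets\<^bsub>G1\<^esub> N) \<subseteq> carrier M" unfolding rc using fiso_cos phib_carrier by auto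
    next
      show "carrier M \<subseteq> fiso ` (rcosets\<^bsub>G1\<^esub> N)"
      proof
        fix x assume "x \<in> carrier M"
        then obtain P where P: "P \<in> carrier (DR A)" "x = P \<odot>\<^bsub>M\<^esub> v" using gen[OF v] by blast
        have "x = fiso (N #>\<^bsub>G1\<^esub> (I +>\<^bsub>DR A\<^esub> P))" using fiso_cos coset_intro phib_coset P by simp
        moreover have "N #>\<^bsub>G1\<^esub> (I +>\<^bsub>DR A\<^esub> P) \<in> rcosets\<^bsub>G1\<^esub> N" unfolding rc using coset_intro[OF P(1)] by blast
        ultimately show "x \<in> fiso ` (rcosets\<^bsub>G1\<^esub> N)" by blast
      qed
    qed
  qed
next
  fix Y1 Y2 assume Y: "Y1 \<in> rcosets\<^bsub>G1\<^esub> N" "Y2 \<in> rcosets\<^bsub>G1\<^esub> N"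
  then obtain X1 X2 where X: "X1 \<in> carrier (verma A \<alpha>)" "X2 \<in> carrier (verma A \<alpha>)"
    "Y1 = N #>\<^bsub>G1\<^esub> X1" "Y2 = N #>\<^bsub>G1\<^esub> X2" by (auto simp: RCOSETS_def)
  have "Y1 \<oplus>\<^bsub>quot_module (verma A \<alpha>) N\<^esub> Y2 = N #>\<^bsub>G1\<^esub> (X1 \<oplus>\<^bsub>verma A \<alpha>\<^esub> X2)"
    unfolding q_add X(3,4) using normal.rcos_sum[OF N_normal, of X1 X2] X(1,2) by simp
  then show "fiso (Y1 \<oplus>\<^bsub>quot_module (verma A \<alpha>) N\<^esub> Y2) = fiso Y1 \<oplus>\<^bsub>M\<^esub> fiso Y2"
    using fiso_cos phib_add[OF X(1,2)] X by simp
next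
  fix r Y assume r: "r \<in> carrier (DR A)" and Y: "Y \<in> rcosets\<^bsub>G1\<^esub> N"
  then obtain X where X: "X \<in> carrier (verma A \<alpha>)" "Y = N #>\<^bsub>G1\<^esub> X" by (auto simp: RCOSETS_def)
  let ?Y0 = "SOME Z. Z \<in> Y"
  have "?Y0 \<in> N #>\<^bsub>G1\<^esub> X" unfolding X(2) using cos_char(1)[OF X(1)] by (rule someI[where x = X])
  then have Y0: "?Y0 \<in> carrier (verma A \<alpha>)" "phib ?Y0 = phib X" using cos_char(2)[OF X(1)] by auto
  have "r \<odot>\<^bsub>quot_module (verma A \<alpha>) N\<^esub> Y = N #>\<^bsub>G1\<^esub> (r \<odot>\<^bsub>verma A \<alpha>\<^esub> ?Y0)" by (rule q_smult)
  then show "fiso (r \<odot>\<^bsub>quot_module (verma A \<alpha>) N\<^esub> Y) = r \<odot>\<^bsub>M\<^esub> fiso Y"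
    using fiso_cos phib_smult[OF r Y0(1)] Y0(2) X by simp
qed

end

theorem proposition4p5:
  fixes A :: "('n::finite \<Rightarrow> int) set"
    and M :: "('n kern, 'm) module"
    and gr :: "('n \<Rightarrow> int) \<Rightarrow> 'm set"
  assumes "generates_Zd A"
    and "graded_simple A M gr"
  shows "\<exists>(\<alpha> :: 'n \<Rightarrow> complex) N f.
           maximal_submodule (DR A) (verma A \<alpha>) N \<and>
           module_iso (DR A) (quot_module (verma A \<alpha>) N) M f"
proof -
  interpret G: gmod A M gr by (rule gmod.intro) (rule assms(2))
  have "carrier M \<noteq> {\<zero>\<^bsub>M\<^esub>}" using assms(2) by (simp add: graded_simple_def)
  then obtain x where x: "x \<in> carrier M" "x \<noteq> \<zero>\<^bsub>M\<^esub>" using G.L.M.zero_closed by blast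
  obtain c where c: "\<forall>a. c a \<in> gr a" "finite {a. c a \<noteq> \<zero>\<^bsub>M\<^esub>}" "x = finsum M c {a. c a \<noteq> \<zero>\<^bsub>M\<^esub>}"
    using G.decomp[OF x(1)] by blast
  have "{a. c a \<noteq> \<zero>\<^bsub>M\<^esub>} \<noteq> {}"
  proof
    assume e: "{a. c a \<noteq> \<zero>\<^bsub>M\<^esub>} = {}"
    have "x = finsum M c {}" using c(3) unfolding e .
    then show False using x(2) by simp
  qed
  then obtain a0 where a0: "c a0 \<noteq> \<zero>\<^bsub>M\<^esub>" by blast
  have v: "c a0 \<in> gr a0" using c(1) by blast
  have "\<forall>j. \<exists>cj. \<forall>w\<in>gr a0. euler j \<odot>\<^bsub>M\<^esub> w = kscal cj \<odot>\<^bsub>M\<^esub> w"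
    using G.eigen[OF v a0] by blast
  then obtain \<alpha> where al: "\<forall>j. \<forall>w\<in>gr a0. euler j \<odot>\<^bsub>M\<^esub> w = kscal (\<alpha> j) \<odot>\<^bsub>M\<^esub> w" by metis
  interpret F: gfix A M gr "c a0" a0 \<alpha>
    by (intro gfix.intro gfix_axioms.intro gmod.intro assms(2) v a0 al)
  show ?thesis using F.N_maximal F.iso by blast
qed

end
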